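(* Let $G$ be a connected graph with $\lambda_{2}(D(G))\leq\frac{17-\sqrt{329}}{2}$. Then $G$ contains none of the following graphs as an induced subgraph: the cycle $C_{4}$, the cycle $C_{5}$, the path $P_{5}$, the graph $H_{1}$ (the cycle $C_4$ with one chord added, i.e. $K_4$ minus an edge), the graph $H_{2}$ (vertices $v_1,\dots,v_5$ with edges $v_1v_2, v_2v_3, v_3v_4, v_2v_5$), and the graph $H_{3}$ (vertices $v_1,\dots,v_5$ with edges $v_1v_2, v_2v_3, v_3v_4, v_1v_5, v_2v_5$).
   Context: All graphs are simple, undirected and connected. $D(G)$ is the distance matrix of $G$ (entries are graph distances), with eigenvalues $\lambda_{1}(D(G))\geq\lambda_{2}(D(G))\geq\cdots\geq\lambda_{n}(D(G))$. *)

theory Defs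
  imports "Jordan_Normal_Form.Char_Poly" "HOL-Library.Multiset"
begin

definition simple_graph :: "nat \<Rightarrow> (nat \<Rightarrow> nat \<Rightarrow> bool) \<Rightarrow> bool" where
  "simple_graph n E \<longleftrightarrow> (\<forall>u v. E u v \<longrightarrow> u < n \<and> v < n)
     \<and> (\<forall>u v. E u v \<longrightarrow> E v u) \<and> (\<forall>u. \<not> E u u)"

(* xs is a walk from u to v of length (number of edges) length xs - 1 *)
definition is_walk :: "nat \<Rightarrow> (nat \<Rightarrow> nat \<Rightarrow> bool) \<Rightarrow> nat list \<Rightarrow> nat \<Rightarrow> nat \<Rightarrow> bool" where
  "is_walk n E xs u v \<longleftrightarrow> xs \<noteq> [] \<and> hd xs = u \<and> last xs = v \<and> set xs \<subseteq> {0..<n}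
     \<and> (\<forall>i. i + 1 < length xs \<longrightarrow> E (xs ! i) (xs ! (i + 1)))"

definition connected_graph :: "nat \<Rightarrow> (nat \<Rightarrow> nat \<Rightarrow> bool) \<Rightarrow> bool" where
  "connected_graph n E \<longleftrightarrow> n \<ge> 1 \<and> (\<forall>u<n. \<forall>v<n. \<exists>xs. is_walk n E xs u v)"

definition graph_dist :: "nat \<Rightarrow> (nat \<Rightarrow> nat \<Rightarrow> bool) \<Rightarrow> nat \<Rightarrow> nat \<Rightarrow> nat" where
  "graph_dist n E u v = (LEAST d. \<exists>xs. is_walk n E xs u v \<and> length xs = d + 1)"

definition dist_matrix :: "nat \<Rightarrow> (nat \<Rightarrow> nat \<Rightarrow> bool) \<Rightarrow> real mat" where
  "dist_matrix n E = mat n n (\<lambda>(i, j). real (graph_dist n E i j))"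

(* eigenvalues with algebraic multiplicity, in non-increasing order;
   eig_desc A ! (k - 1) is lambda_k(A) (1-indexed) *)
definition eig_desc :: "real mat \<Rightarrow> real list" where
  "eig_desc A = rev (sorted_list_of_multiset (proots (char_poly A)))"

definition lambda_k :: "nat \<Rightarrow> real mat \<Rightarrow> real" where
  "lambda_k k A = eig_desc A ! (k - 1)"

definition induced_subgraph_of ::
  "nat \<Rightarrow> (nat \<Rightarrow> nat \<Rightarrow> bool) \<Rightarrow> nat \<Rightarrow> (nat \<Rightarrow> nat \<Rightarrow> bool) \<Rightarrow> bool" where
  "induced_subgraph_of k EH n E \<longleftrightarrow> (\<exists>f. inj_on f {0..<k} \<and> f ` {0..<k} \<subseteq> {0..<n}
     \<and> (\<forall>i<k. \<forall>j<k. E (f i) (f j) \<longleftrightarrow> EH i j))"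

definition edges_of :: "(nat \<times> nat) list \<Rightarrow> nat \<Rightarrow> nat \<Rightarrow> bool" where
  "edges_of es i j \<longleftrightarrow> (i, j) \<in> set es \<or> (j, i) \<in> set es"

(* the forbidden graphs; v_1..v_5 of the paper are 0..4 *)
definition C4 where "C4 = edges_of [(0,1),(1,2),(2,3),(3,0)]"
definition C5 where "C5 = edges_of [(0,1),(1,2),(2,3),(3,4),(4,0)]"
definition P5 where "P5 = edges_of [(0,1),(1,2),(2,3),(3,4)]"
definition H1 where "H1 = edges_of [(0,1),(1,2),(2,3),(3,0),(0,2)]"
definition H2 where "H2 = edges_of [(0,1),(1,2),(2,3),(1,4)]"
definition H3 where "H3 = edges_of [(0,1),(1,2),(2,3),(0,4),(1,4)]"

end

theory Submission
  imports Defs "Jordan_Normal_Form.Schur_Decomposition"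
begin


lemma sym_real_eigenvalue:
  fixes A :: "real mat"
  assumes A: "A \<in> carrier_mat n n" and sym: "transpose_mat A = A" and n: "n > 0"
  shows "\<exists>e. eigenvalue A e"
proof -
  let ?C = "map_mat complex_of_real A"
  have C: "?C \<in> carrier_mat n n" using A by simp
  obtain as where cp: "char_poly ?C = (\<Prod>a\<leftarrow>as. [:-a,1:])" and len: "length as = n"
    using char_poly_factorized[OF C] by blast
  then obtain a where a: "a \<in> set as" using n by (cases as) auto
  have "poly (char_poly ?C) a = 0" unfolding cp using a
    by (simp add: poly_prod_list_zero_iff)
  hence "eigenvalue ?C a" using eigenvalue_root_char_poly[OF C] by simp
  then obtain x where ev: "eigenvector ?C x a" unfolding eigenvalue_def by blast
  hence x: "x \<in> carrier_vec n" and x0: "x \<noteq> 0\<^sub>v n" and Cx: "?C *\<^sub>v x = a \<cdot>\<^sub>v x"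
    unfolding eigenvector_def using C by auto
  have symij: "A $$ (i,j) = A $$ (j,i)" if "i < n" "j < n" for i j
    using arg_cong[OF sym, of "\<lambda>M. M $$ (i,j)"] that A by auto
  have Cxi: "(\<Sum>j<n. complex_of_real (A$$(i,j)) * x$j) = a * x$i" if i: "i < n" for i
  proof -
    have "(?C *\<^sub>v x) $ i = a * x $ i" using Cx i x by simp
    moreover have "(?C *\<^sub>v x) $ i = (\<Sum>j<n. complex_of_real (A$$(i,j)) * x$j)"
      using i x A by (auto simp: scalar_prod_def atLeast0LessThan)
    ultimately show ?thesis by simp
  qed
  define s where "s = (\<Sum>i<n. cnj (x$i) * (\<Sum>j<n. complex_of_real (A$$(i,j)) * x$j))"
  define t where "t = (\<Sum>i<n. cnj (x$i) * x$i)"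
  have "s = (\<Sum>i<n. cnj (x$i) * (a * x$i))" unfolding s_def
    by (rule sum.cong) (simp_all add: Cxi)
  hence s1: "s = a * t" unfolding t_def by (simp add: sum_distrib_left mult_ac)
  have "cnj s = (\<Sum>i<n. \<Sum>j<n. x$i * complex_of_real (A$$(i,j)) * cnj (x$j))"
    unfolding s_def by (simp add: sum_distrib_left mult_ac)
  also have "\<dots> = (\<Sum>j<n. \<Sum>i<n. x$i * complex_of_real (A$$(i,j)) * cnj (x$j))"
    by (rule sum.swap)
  also have "\<dots> = s" unfolding s_def sum_distrib_left
    by (intro sum.cong refl, auto simp: symij mult_ac)
  finally have s2: "cnj s = s" .
  have "cnj t = t" unfolding t_def by (simp add: mult.commute)
  with s1 s2 have eq: "a * t = cnj a * t" by (metis complex_cnj_mult)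
  obtain i where i: "i < n" "x $ i \<noteq> 0" using x x0 by (metis eq_vecI carrier_vecD index_zero_vec(1,2))
  have tr: "t = complex_of_real (\<Sum>i<n. (cmod (x$i))^2)" unfolding t_def
    unfolding of_real_sum by (rule sum.cong[OF refl]) (metis complex_norm_square mult.commute)
  have "(\<Sum>i<n. (cmod (x$i))^2) > 0"
    by (rule sum_pos2[of _ i], insert i, auto)
  hence "t \<noteq> 0" unfolding tr by (metis of_real_eq_0_iff less_irrefl)
  with eq have "a = cnj a" by (metis mult_cancel_right)
  hence aR: "a = complex_of_real (Re a)" by (simp add: complex_eq_iff)
  have "poly (char_poly ?C) (complex_of_real (Re a)) = 0"
    using \<open>poly (char_poly ?C) a = 0\<close> aR by simp
  moreover have "char_poly ?C = map_poly complex_of_real (char_poly A)"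
    by (rule of_real_hom.char_poly_hom[OF A])
  ultimately have "poly (char_poly A) (Re a) = 0" by simp
  hence "eigenvalue A (Re a)" using eigenvalue_root_char_poly[OF A] by simp
  thus ?thesis by blast
qed

lemma orth_completion:
  fixes u :: "real vec"
  assumes u: "u \<in> carrier_vec n" and uu: "u \<bullet> u = 1"
  shows "\<exists>W \<in> carrier_mat n n. transpose_mat W * W = 1\<^sub>m n \<and> col W 0 = u"
proof -
  have u0: "u \<noteq> 0\<^sub>v n" using uu u by auto
  interpret cof_vec_space n "TYPE(real)" .
  define b where "b = basis_completion u"
  note bc = basis_completion[OF u u0, folded b_def]
  define ws where "ws = gram_schmidt n b"
  from gram_schmidt_result[OF bc(2) bc(4) bc(5) ws_def]
  have ws: "corthogonal ws" "set ws \<subseteq> carrier_vec n" "length ws = n" using bc(6) by auto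
  have "n \<noteq> 0" using bc(6) bc(7) u0 u by (cases b) auto
  then obtain vs where bv: "b = u # vs" using bc(6) bc(7) by (cases b) auto
  have hdws: "hd ws = u" unfolding ws_def bv using u by simp
  define ws' where "ws' = map (\<lambda>w. (1 / sqrt (w \<bullet> w)) \<cdot>\<^sub>v w) ws"
  have len': "length ws' = n" using ws unfolding ws'_def by simp
  have wsi: "ws ! i \<in> carrier_vec n" if "i < n" for i using ws that by auto
  have ws'i: "ws' ! i = (1 / sqrt (ws!i \<bullet> ws!i)) \<cdot>\<^sub>v (ws ! i)" if "i < n" for i
    using that ws unfolding ws'_def by simp
  have ws'c: "ws' ! i \<in> carrier_vec n" if "i < n" for i using ws'i[OF that] wsi[OF that] by simp
  have pos: "ws!i \<bullet> ws!i > 0" if "i < n" for i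
  proof -
    have "ws!i \<bullet> ws!i \<noteq> 0" using corthogonalD[OF ws(1), of i i] that ws(3) by simp
    moreover have "ws!i \<bullet> ws!i \<ge> 0" using wsi[OF that]
      by (simp add: scalar_prod_def sum_nonneg)
    ultimately show ?thesis by simp
  qed
  have orth: "ws!i \<bullet> ws!j = 0" if "i < n" "j < n" "i \<noteq> j" for i j
    using corthogonalD[OF ws(1), of i j] that ws(3) by simp
  define W where "W = mat_of_cols n ws'"
  have W: "W \<in> carrier_mat n n" unfolding W_def using mat_of_cols_carrier(1)[of n ws'] len' by simp
  have colW: "col W i = ws' ! i" if "i < n" for i
    unfolding W_def using that len' ws'c by simp
  have "transpose_mat W * W = 1\<^sub>m n"
  proof (rule eq_matI)
    fix i j assume i: "i < dim_row (1\<^sub>m n)" and j: "j < dim_col (1\<^sub>m n)"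
    hence i: "i < n" and j: "j < n" by auto
    have "(transpose_mat W * W) $$ (i,j) = ws'!i \<bullet> ws'!j"
      using i j W colW by simp
    also have "\<dots> = (1 / sqrt (ws!i \<bullet> ws!i)) * (1 / sqrt (ws!j \<bullet> ws!j)) * (ws!i \<bullet> ws!j)"
      using ws'i[OF i] ws'i[OF j] wsi[OF i] wsi[OF j] by simp
    also have "\<dots> = 1\<^sub>m n $$ (i,j)"
    proof (cases "i = j")
      case True
      have "sqrt (ws!i \<bullet> ws!i) * sqrt (ws!i \<bullet> ws!i) = ws!i \<bullet> ws!i"
        using pos[OF i] by simp
      thus ?thesis using True i pos[OF i] by (simp add: field_simps)
    next
      case False thus ?thesis using orth[OF i j] i j by simp
    qed
    finally show "(transpose_mat W * W) $$ (i,j) = 1\<^sub>m n $$ (i,j)" .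
  qed (insert W, auto)
  moreover have "col W 0 = u"
  proof -
    have "ws ! 0 = u" using hdws ws(3) \<open>n \<noteq> 0\<close> by (cases ws) auto
    thus ?thesis using colW[of 0] ws'i[of 0] \<open>n \<noteq> 0\<close> uu by simp
  qed
  ultimately show ?thesis using W by blast
qed


lemma block_diag_mult:
  fixes A1 :: "'a::comm_ring_1 mat"
  assumes A1: "A1 \<in> carrier_mat 1 1" and A2: "A2 \<in> carrier_mat 1 1"
    and B1: "B1 \<in> carrier_mat m m" and B2: "B2 \<in> carrier_mat m m"
  shows "four_block_mat A1 (0\<^sub>m 1 m) (0\<^sub>m m 1) B1 * four_block_mat A2 (0\<^sub>m 1 m) (0\<^sub>m m 1) B2
    = four_block_mat (A1*A2) (0\<^sub>m 1 m) (0\<^sub>m m 1) (B1*B2)"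
proof -
  have z1: "(0\<^sub>m 1 m :: 'a mat) \<in> carrier_mat 1 m" and z2: "(0\<^sub>m m 1 :: 'a mat) \<in> carrier_mat m 1" by auto
  show ?thesis
    apply (subst mult_four_block_mat[OF A1 z1 z2 B1 A2 z1 z2 B2])
    apply (rule cong_four_block_mat)
    using A1 A2 B1 B2 by auto
qed

lemma spectral:
  fixes A :: "real mat"
  assumes "A \<in> carrier_mat n n" "transpose_mat A = A"
  shows "\<exists>P D. P \<in> carrier_mat n n \<and> D \<in> carrier_mat n n \<and> transpose_mat P * P = 1\<^sub>m n
     \<and> transpose_mat P * A * P = D \<and> diagonal_mat D"
  using assms
proof (induction n arbitrary: A)
  case 0
  show ?case
    by (rule exI[of _ "1\<^sub>m 0"], rule exI[of _ A], insert 0, auto simp: diagonal_mat_def)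
next
  case (Suc m)
  let ?n = "Suc m"
  have A: "A \<in> carrier_mat ?n ?n" and symA: "transpose_mat A = A" using Suc.prems by auto
  obtain e where "eigenvalue A e" using sym_real_eigenvalue[OF A symA] by auto
  from find_eigenvector[OF A this] obtain v where ev: "eigenvector A v e" by blast
  hence v: "v \<in> carrier_vec ?n" and v0: "v \<noteq> 0\<^sub>v ?n" and Av: "A *\<^sub>v v = e \<cdot>\<^sub>v v"
    unfolding eigenvector_def using A by auto
  have vv: "v \<bullet> v > 0" using v v0
    by (metis conjugate_square_greater_0_vec vec_conjugate_real)
  define u where "u = (1 / sqrt (v \<bullet> v)) \<cdot>\<^sub>v v"
  have u: "u \<in> carrier_vec ?n" unfolding u_def using v by simp
  have "u \<bullet> u = (1 / sqrt (v \<bullet> v)) * (1 / sqrt (v \<bullet> v)) * (v \<bullet> v)"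
    unfolding u_def using v by simp
  also have "\<dots> = 1" using vv by (simp add: field_simps)
  finally have uu: "u \<bullet> u = 1" .
  have Au: "A *\<^sub>v u = e \<cdot>\<^sub>v u" unfolding u_def using mult_mat_vec[OF A v] Av v
    by (simp add: smult_smult_assoc mult.commute)
  obtain W where W: "W \<in> carrier_mat ?n ?n" and WW: "transpose_mat W * W = 1\<^sub>m ?n"
    and Wu: "col W 0 = u" using orth_completion[OF u uu] by blast
  define Wt where "Wt = transpose_mat W"
  have Wt: "Wt \<in> carrier_mat ?n ?n" unfolding Wt_def using W by simp
  define A' where "A' = Wt * A * W"
  have A': "A' \<in> carrier_mat ?n ?n" unfolding A'_def using W Wt A by simp
  have "transpose_mat A' = transpose_mat W * transpose_mat (Wt * A)" unfolding A'_def
    by (rule transpose_mult[of _ ?n ?n], insert Wt A W, auto)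
  also have "transpose_mat (Wt * A) = transpose_mat A * transpose_mat Wt" by (rule transpose_mult[OF Wt A])
  finally have symA': "transpose_mat A' = A'" unfolding A'_def using symA Wt A W
    by (simp add: Wt_def)
  have AW: "A * W \<in> carrier_mat ?n ?n" using A W by simp
  have "col A' 0 = col (Wt * (A * W)) 0" unfolding A'_def using Wt A W by simp
  also have "\<dots> = Wt *\<^sub>v col (A*W) 0" by (rule col_mult2[OF Wt AW], simp)
  also have "col (A*W) 0 = A *\<^sub>v col W 0" by (rule col_mult2[OF A W], simp)
  finally have "col A' 0 = Wt *\<^sub>v (A *\<^sub>v u)" using Wu by simp
  also have "\<dots> = e \<cdot>\<^sub>v (Wt *\<^sub>v col W 0)" using Au mult_mat_vec[OF Wt u] Wu by simp
  also have "Wt *\<^sub>v col W 0 = col (Wt * W) 0" by (rule col_mult2[OF Wt W, symmetric]) simp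
  also have "\<dots> = unit_vec ?n 0" using WW unfolding Wt_def by simp
  finally have colA': "col A' 0 = e \<cdot>\<^sub>v unit_vec ?n 0" .
  have A'i0: "A' $$ (i, 0) = (if i = 0 then e else 0)" if "i < ?n" for i
    using arg_cong[OF colA', of "\<lambda>x. x $ i"] that A' by auto
  have A'0j: "A' $$ (0, j) = (if j = 0 then e else 0)" if "j < ?n" for j
    using arg_cong[OF symA', of "\<lambda>M. M $$ (j, 0)"] A'i0[OF that] that A' by auto
  define A3 where "A3 = mat m m (\<lambda>(i,j). A' $$ (Suc i, Suc j))"
  have A3: "A3 \<in> carrier_mat m m" unfolding A3_def by simp
  have symA3: "transpose_mat A3 = A3"
  proof (rule eq_matI)
    fix i j assume "i < dim_row A3" "j < dim_col A3"
    hence ij: "Suc i < ?n" "Suc j < ?n" using A3 by auto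
    have "A' $$ (Suc j, Suc i) = A' $$ (Suc i, Suc j)"
      using arg_cong[OF symA', of "\<lambda>M. M $$ (Suc i, Suc j)"] ij A' by auto
    thus "transpose_mat A3 $$ (i, j) = A3 $$ (i, j)" using ij A3 by (simp add: A3_def)
  qed (insert A3, auto)
  from Suc.IH[OF A3 symA3] obtain P3 D3 where P3: "P3 \<in> carrier_mat m m" and D3: "D3 \<in> carrier_mat m m"
    and P3P3: "transpose_mat P3 * P3 = 1\<^sub>m m" and P3A3: "transpose_mat P3 * A3 * P3 = D3"
    and diagD3: "diagonal_mat D3" by blast
  define E where "E = mat 1 1 (\<lambda>_. e)"
  have E: "E \<in> carrier_mat 1 1" unfolding E_def by simp
  have A'b: "A' = four_block_mat E (0\<^sub>m 1 m) (0\<^sub>m m 1) A3"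
    by (rule eq_matI, insert A' A'i0 A'0j, auto simp: E_def A3_def)
  define X where "X = four_block_mat (1\<^sub>m 1) (0\<^sub>m 1 m) (0\<^sub>m m 1) P3"
  have X: "X \<in> carrier_mat ?n ?n" unfolding X_def using P3
    using four_block_carrier_mat[of "1\<^sub>m 1" 1 1 P3 m m] by simp
  have Xt: "transpose_mat X = four_block_mat (1\<^sub>m 1) (0\<^sub>m 1 m) (0\<^sub>m m 1) (transpose_mat P3)"
    unfolding X_def by (subst transpose_four_block_mat, insert P3, auto)
  have o1: "(1\<^sub>m 1 :: real mat) \<in> carrier_mat 1 1" by simp
  have P3t: "transpose_mat P3 \<in> carrier_mat m m" using P3 by simp
  have "transpose_mat X * X = four_block_mat (1\<^sub>m 1 * 1\<^sub>m 1) (0\<^sub>m 1 m) (0\<^sub>m m 1) (transpose_mat P3 * P3)"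
    unfolding Xt unfolding X_def by (rule block_diag_mult[OF o1 o1 P3t P3])
  hence XX: "transpose_mat X * X = 1\<^sub>m ?n" using P3P3 by simp
  have "transpose_mat X * A' = four_block_mat (1\<^sub>m 1 * E) (0\<^sub>m 1 m) (0\<^sub>m m 1) (transpose_mat P3 * A3)"
    unfolding Xt A'b by (rule block_diag_mult[OF o1 E P3t A3])
  hence "transpose_mat X * A' * X = four_block_mat (1\<^sub>m 1 * E * 1\<^sub>m 1) (0\<^sub>m 1 m) (0\<^sub>m m 1) (transpose_mat P3 * A3 * P3)"
    unfolding X_def using block_diag_mult[of "1\<^sub>m 1 * E" "1\<^sub>m 1" "transpose_mat P3 * A3" m P3] E P3 A3 by simp
  hence XA'X: "transpose_mat X * A' * X = four_block_mat E (0\<^sub>m 1 m) (0\<^sub>m m 1) D3"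
    using E P3A3 by simp
  define P where "P = W * X"
  have P: "P \<in> carrier_mat ?n ?n" unfolding P_def using W X by simp
  have Pt: "transpose_mat P = transpose_mat X * Wt"
    unfolding P_def Wt_def using transpose_mult[OF W X] .
  have "transpose_mat P * P = transpose_mat X * (Wt * W) * X"
    unfolding Pt unfolding P_def using X W Wt by (simp add: assoc_mult_mat[of _ ?n ?n _ ?n _ ?n])
  also have "\<dots> = 1\<^sub>m ?n" using WW XX X unfolding Wt_def by simp
  finally have PP: "transpose_mat P * P = 1\<^sub>m ?n" .
  have "transpose_mat P * A * P = transpose_mat X * A' * X"
    unfolding Pt unfolding P_def A'_def using X W Wt A by (simp add: assoc_mult_mat[of _ ?n ?n _ ?n _ ?n])
  also have "\<dots> = four_block_mat E (0\<^sub>m 1 m) (0\<^sub>m m 1) D3" by (rule XA'X)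
  finally have PAP: "transpose_mat P * A * P = four_block_mat E (0\<^sub>m 1 m) (0\<^sub>m m 1) D3" .
  have D: "four_block_mat E (0\<^sub>m 1 m) (0\<^sub>m m 1) D3 \<in> carrier_mat ?n ?n"
    using four_block_carrier_mat[OF E D3] by simp
  have diag: "diagonal_mat (four_block_mat E (0\<^sub>m 1 m) (0\<^sub>m m 1) D3)"
    unfolding diagonal_mat_def using E D3 diagD3
    by (auto simp: diagonal_mat_def)
  show ?case using P D PP PAP diag by blast
qed



lemma proots_lin_prod: "proots (\<Prod>a\<leftarrow>ds. [:- a, 1:]) = mset (ds :: real list)"
proof (induction ds)
  case Nil thus ?case by simp
next
  case (Cons a ds)
  have "(\<Prod>a\<leftarrow>ds. [:- a, 1:]) \<noteq> (0 :: real poly)"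
    by (auto simp: prod_list_zero_iff)
  hence "proots ([:-a,1:] * (\<Prod>a\<leftarrow>ds. [:- a, 1:])) = proots [:-a,1:] + proots (\<Prod>a\<leftarrow>ds. [:- a, 1:])"
    by (intro proots_mult) auto
  thus ?case unfolding prod_list.Cons Cons.IH using proots_linear_factor[of "-a"] by simp
qed

lemma second_largest:
  fixes ds :: "real list"
  assumes "i < length ds" "j < length ds" "i \<noteq> j" "ds ! i > c" "ds ! j > c"
  shows "rev (sort ds) ! 1 > c"
proof (rule ccontr)
  assume nc: "\<not> rev (sort ds) ! 1 > c"
  let ?s = "sort ds" and ?n = "length ds"
  have len: "length ?s = ?n" by simp
  have n2: "?n \<ge> 2" using assms by linarith
  have "rev ?s ! 1 = ?s ! (?n - 2)" using n2 by (simp add: rev_nth numeral_2_eq_2)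
  with nc have le: "?s ! (?n - 2) \<le> c" by simp
  have small: "?s ! k \<le> c" if "k \<le> ?n - 2" for k
  proof -
    have "?s ! k \<le> ?s ! (?n - 2)" by (rule sorted_nth_mono[OF sorted_sort that], insert n2, simp)
    thus ?thesis using le by linarith
  qed
  have "length (filter (\<lambda>x. x > c) ?s) = card {k. k < ?n \<and> ?s ! k > c}"
    by (simp add: length_filter_conv_card)
  also have "\<dots> \<le> card {?n - 1}"
  proof (rule card_mono)
    show "{k. k < ?n \<and> ?s ! k > c} \<subseteq> {?n - 1}"
    proof
      fix k assume "k \<in> {k. k < ?n \<and> ?s ! k > c}"
      hence k: "k < ?n" "?s ! k > c" by auto
      hence "\<not> k \<le> ?n - 2" using small by force
      thus "k \<in> {?n - 1}" using k n2 by simp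
    qed
  qed simp
  finally have f1: "length (filter (\<lambda>x. x > c) ?s) \<le> 1" by simp
  have "length (filter (\<lambda>x. x > c) ?s) = length (filter (\<lambda>x. x > c) ds)"
    by (metis mset_filter mset_sort size_mset)
  also have "\<dots> = card {k. k < ?n \<and> ds ! k > c}" by (simp add: length_filter_conv_card)
  also have "\<dots> \<ge> card {i, j}"
    by (rule card_mono, auto simp: assms)
  finally show False using assms(3) f1 by simp
qed


lemma quad_contra:
  fixes A :: "real mat" and c :: real
  assumes A: "A \<in> carrier_mat n n" and symA: "transpose_mat A = A"
    and lam: "lambda_k 2 A \<le> c"
    and v1: "v1 \<in> carrier_vec n" and v2: "v2 \<in> carrier_vec n"
    and pd: "\<And>a b. (a, b) \<noteq> (0, 0) \<Longrightarrow>
      (a \<cdot>\<^sub>v v1 + b \<cdot>\<^sub>v v2) \<bullet> (A *\<^sub>v (a \<cdot>\<^sub>v v1 + b \<cdot>\<^sub>v v2))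
      > c * ((a \<cdot>\<^sub>v v1 + b \<cdot>\<^sub>v v2) \<bullet> (a \<cdot>\<^sub>v v1 + b \<cdot>\<^sub>v v2))"
  shows False
proof -
  obtain P D where P: "P \<in> carrier_mat n n" and D: "D \<in> carrier_mat n n"
    and PP: "transpose_mat P * P = 1\<^sub>m n" and PAP: "transpose_mat P * A * P = D"
    and diag: "diagonal_mat D" using spectral[OF A symA] by blast
  define Pt where "Pt = transpose_mat P"
  have Pt: "Pt \<in> carrier_mat n n" unfolding Pt_def using P by simp
  have PP': "P * Pt = 1\<^sub>m n" using mat_mult_left_right_inverse[OF Pt P] PP unfolding Pt_def by simp
  have AD: "A = P * D * Pt"
  proof -
    have "P * D * Pt = (P * Pt) * A * (P * Pt)" unfolding PAP[symmetric] Pt_def[symmetric]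
      using P Pt A by (simp add: assoc_mult_mat[of _ n n _ n _ n])
    thus ?thesis using PP' A by simp
  qed
  have sim: "similar_mat A D" unfolding similar_mat_def similar_mat_wit_def
    by (rule exI[of _ P], rule exI[of _ Pt], insert P Pt D A PP PP' AD, auto simp: Pt_def)
  define ds where "ds = diag_mat D"
  have lends: "length ds = n" unfolding ds_def diag_mat_def using D by simp
  have dsi: "ds ! i = D $$ (i,i)" if "i < n" for i unfolding ds_def diag_mat_def using D that by simp
  have ut: "upper_triangular D" using diag D unfolding diagonal_mat_def upper_triangular_def by auto
  have cp: "char_poly A = (\<Prod>a\<leftarrow>ds. [:- a, 1:])"
    unfolding char_poly_similar[OF sim] ds_def by (rule char_poly_upper_triangular[OF D ut])
  have eig: "eig_desc A = rev (sort ds)" unfolding eig_desc_def cp proots_lin_prod by simp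
  have atmost: "\<not> (ds ! i > c \<and> ds ! j > c)" if "i < n" "j < n" "i \<noteq> j" for i j
    using second_largest[of i ds j c] lam that lends unfolding lambda_k_def eig by force
  obtain i0 where i0: "\<And>i. i < n \<Longrightarrow> i \<noteq> i0 \<Longrightarrow> ds ! i \<le> c"
  proof (cases "\<exists>i<n. ds ! i > c")
    case True
    then obtain i0 where i0: "i0 < n" "ds ! i0 > c" by blast
    show ?thesis
    proof (rule that[of i0])
      fix i assume "i < n" "i \<noteq> i0"
      thus "ds ! i \<le> c" using atmost[of i i0] i0 by linarith
    qed
  next
    case False thus ?thesis using that by force
  qed
  define p where "p = col P i0"
  define al where "al = p \<bullet> v1"
  define be where "be = p \<bullet> v2"
  define a where "a = (if al = 0 \<and> be = 0 then 1 else be)"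
  define b where "b = (if al = 0 \<and> be = 0 then 0 else - al)"
  have ab: "(a, b) \<noteq> (0, 0)" unfolding a_def b_def by auto
  have abz: "a * al + b * be = 0" unfolding a_def b_def by auto
  define x where "x = a \<cdot>\<^sub>v v1 + b \<cdot>\<^sub>v v2"
  have x: "x \<in> carrier_vec n" unfolding x_def using v1 v2 by simp
  define y where "y = Pt *\<^sub>v x"
  have y: "y \<in> carrier_vec n" unfolding y_def using Pt x by simp
  have yi0: "y $ i0 = 0" if "i0 < n"
  proof -
    have "y $ i0 = p \<bullet> x" unfolding y_def p_def Pt_def using that P x by simp
    also have "\<dots> = a * al + b * be" unfolding x_def al_def be_def p_def
    proof -
      have pc: "col P i0 \<in> carrier_vec n" using P by (intro carrier_vecI) simp
      have "col P i0 \<bullet> (a \<cdot>\<^sub>v v1 + b \<cdot>\<^sub>v v2) = col P i0 \<bullet> (a \<cdot>\<^sub>v v1) + col P i0 \<bullet> (b \<cdot>\<^sub>v v2)"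
        by (rule scalar_prod_add_distrib[OF pc], insert v1 v2, auto)
      thus "col P i0 \<bullet> (a \<cdot>\<^sub>v v1 + b \<cdot>\<^sub>v v2) = a * (col P i0 \<bullet> v1) + b * (col P i0 \<bullet> v2)"
        using pc v1 v2 by simp
    qed
    finally show ?thesis using abz by simp
  qed
  have PD: "P * D \<in> carrier_mat n n" using P D by simp
  have "(P * D * Pt) *\<^sub>v x = (P * D) *\<^sub>v (Pt *\<^sub>v x)" by (rule assoc_mult_mat_vec[OF PD Pt x])
  also have "\<dots> = P *\<^sub>v (D *\<^sub>v (Pt *\<^sub>v x))" by (rule assoc_mult_mat_vec[OF P D], insert Pt x, simp)
  finally have "x \<bullet> (A *\<^sub>v x) = x \<bullet> (P *\<^sub>v (D *\<^sub>v y))" unfolding AD y_def by simp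
  also have "\<dots> = y \<bullet> (D *\<^sub>v y)" unfolding y_def Pt_def
    using transpose_vec_mult_scalar[OF P, of "D *\<^sub>v (transpose_mat P *\<^sub>v x)" x] D P x by simp
  finally have xAx: "x \<bullet> (A *\<^sub>v x) = y \<bullet> (D *\<^sub>v y)" .
  have "y \<bullet> y = x \<bullet> (P *\<^sub>v y)" unfolding y_def Pt_def
    using transpose_vec_mult_scalar[OF P, of "transpose_mat P *\<^sub>v x" x] P x by simp
  also have "P *\<^sub>v y = (P * Pt) *\<^sub>v x" unfolding y_def using P Pt x by simp
  also have "\<dots> = x" using PP' x by simp
  finally have xx: "x \<bullet> x = y \<bullet> y" by simp
  have Dy: "(D *\<^sub>v y) $ i = ds ! i * y $ i" if i: "i < n" for i
  proof -
    have "(D *\<^sub>v y) $ i = (\<Sum>j\<in>{0..<n}. D $$ (i,j) * y $ j)"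
      using D y i by (simp add: scalar_prod_def)
    also have "\<dots> = (\<Sum>j\<in>{0..<n}. if j = i then D $$ (i,i) * y $ i else 0)"
      by (rule sum.cong[OF refl], insert diag D i, auto simp: diagonal_mat_def)
    also have "\<dots> = ds ! i * y $ i" using i dsi by simp
    finally show ?thesis .
  qed
  have dimDy: "dim_vec (D *\<^sub>v y) = n" using D by simp
  have dy: "dim_vec y = n" using y by simp
  have "y \<bullet> (D *\<^sub>v y) = (\<Sum>i\<in>{0..<n}. y $ i * (D *\<^sub>v y) $ i)"
    unfolding scalar_prod_def dimDy ..
  also have "\<dots> = (\<Sum>i\<in>{0..<n}. ds ! i * (y $ i)^2)"
    by (rule sum.cong[OF refl], simp add: Dy power2_eq_square)
  finally have 1: "y \<bullet> (D *\<^sub>v y) = (\<Sum>i\<in>{0..<n}. ds ! i * (y $ i)^2)" .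
  have 2: "y \<bullet> y = (\<Sum>i\<in>{0..<n}. (y $ i)^2)" unfolding scalar_prod_def dy
    by (simp add: power2_eq_square)
  have "y \<bullet> (D *\<^sub>v y) - c * (y \<bullet> y) = (\<Sum>i\<in>{0..<n}. (ds ! i - c) * (y $ i)^2)"
    unfolding 1 2 by (simp add: sum_distrib_left sum_subtractf[symmetric] algebra_simps)
  also have "\<dots> \<le> 0"
  proof (rule sum_nonpos)
    fix i assume "i \<in> {0..<n}"
    hence i: "i < n" by simp
    show "(ds ! i - c) * (y $ i)^2 \<le> 0"
    proof (cases "i = i0")
      case True thus ?thesis using yi0 i by simp
    next
      case False thus ?thesis using i0[OF i] by (simp add: mult_nonpos_nonneg)
    qed
  qed
  finally have "x \<bullet> (A *\<^sub>v x) \<le> c * (x \<bullet> x)" using xAx xx by simp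
  with pd[OF ab] show False unfolding x_def by simp
qed




lemma is_walk_single: "is_walk n E [x] u v \<longleftrightarrow> x < n \<and> u = x \<and> v = x"
  unfolding is_walk_def by auto

lemma is_walk_cons2:
  "is_walk n E (x # y # xs) u v \<longleftrightarrow> u = x \<and> x < n \<and> E x y \<and> is_walk n E (y # xs) y v"
proof -
  have "(\<forall>i. i + 1 < length (x # y # xs) \<longrightarrow> E ((x # y # xs) ! i) ((x # y # xs) ! (i + 1)))
    \<longleftrightarrow> E x y \<and> (\<forall>i. i + 1 < length (y # xs) \<longrightarrow> E ((y # xs) ! i) ((y # xs) ! (i + 1)))"
    (is "?L \<longleftrightarrow> ?R")
  proof
    assume L: ?L
    have "E x y" using L[rule_format, of 0] by simp
    moreover have "\<forall>i. i + 1 < length (y # xs) \<longrightarrow> E ((y # xs) ! i) ((y # xs) ! (i + 1))"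
      using L[rule_format, of "Suc i" for i] by simp
    ultimately show ?R by blast
  next
    assume R: ?R
    show ?L
    proof (intro allI impI)
      fix i assume i: "i + 1 < length (x # y # xs)"
      show "E ((x # y # xs) ! i) ((x # y # xs) ! (i + 1))"
      proof (cases i)
        case 0 thus ?thesis using R by simp
      next
        case (Suc k) thus ?thesis using R i by auto
      qed
    qed
  qed
  thus ?thesis unfolding is_walk_def by auto
qed

lemma walk_rev:
  assumes sg: "simple_graph n E" and w: "is_walk n E xs u v"
  shows "is_walk n E (rev xs) v u"
proof -
  have sym: "\<And>a b. E a b \<Longrightarrow> E b a" using sg unfolding simple_graph_def by blast
  from w have ne: "xs \<noteq> []" and h: "hd xs = u" and l: "last xs = v" and s: "set xs \<subseteq> {0..<n}"
    and e: "\<And>i. i + 1 < length xs \<Longrightarrow> E (xs ! i) (xs ! (i + 1))" unfolding is_walk_def by auto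
  have "E (rev xs ! i) (rev xs ! (i + 1))" if i: "i + 1 < length (rev xs)" for i
  proof -
    let ?L = "length xs"
    have "rev xs ! i = xs ! (?L - 1 - i)" "rev xs ! (i+1) = xs ! (?L - 1 - i - 1)"
      using i by (auto simp: rev_nth)
    moreover have "E (xs ! (?L - 1 - i - 1)) (xs ! (?L - 1 - i - 1 + 1))"
      by (rule e, insert i, auto)
    moreover have "?L - 1 - i - 1 + 1 = ?L - 1 - i" using i by auto
    ultimately show ?thesis using sym by auto
  qed
  thus ?thesis unfolding is_walk_def using ne h l s by (auto simp: hd_rev last_rev)
qed

lemma dist_le:
  assumes "is_walk n E xs u v"
  shows "graph_dist n E u v \<le> length xs - 1"
  unfolding graph_dist_def
  by (rule Least_le, rule exI[of _ xs], insert assms, auto simp: is_walk_def)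

lemma dist_walk:
  assumes "connected_graph n E" "u < n" "v < n"
  shows "\<exists>xs. is_walk n E xs u v \<and> length xs = graph_dist n E u v + 1"
proof -
  obtain xs where "is_walk n E xs u v" using assms unfolding connected_graph_def by blast
  hence ex: "\<exists>d xs. is_walk n E xs u v \<and> length xs = d + 1" 
    by (intro exI[of _ "length xs - 1"] exI[of _ xs]) (auto simp: is_walk_def)
  show ?thesis unfolding graph_dist_def by (rule LeastI_ex[OF ex])
qed

lemma dist_sym:
  assumes sg: "simple_graph n E" and c: "connected_graph n E" and "u < n" "v < n"
  shows "graph_dist n E u v = graph_dist n E v u"
proof -
  have "graph_dist n E a b \<le> graph_dist n E b a" if ab: "a < n" "b < n" for a b
  proof -
    obtain xs where "is_walk n E xs b a" "length xs = graph_dist n E b a + 1"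
      using dist_walk[OF c ab(2) ab(1)] by blast
    thus ?thesis using dist_le[OF walk_rev[OF sg]] by fastforce
  qed
  thus ?thesis using assms by (meson le_antisym)
qed

lemma dist_self: "u < n \<Longrightarrow> graph_dist n E u u = 0"
  using dist_le[of n E "[u]" u u] by (simp add: is_walk_single)

lemma dist_adj:
  assumes sg: "simple_graph n E" and e: "E u v"
  shows "graph_dist n E u v = 1"
proof -
  have uv: "u < n" "v < n" "u \<noteq> v" using sg e unfolding simple_graph_def by blast+
  have le: "graph_dist n E u v \<le> 1"
    using dist_le[of n E "[u, v]" u v] uv e by (simp add: is_walk_cons2 is_walk_single)
  have "graph_dist n E u v \<noteq> 0"
  proof
    assume 0: "graph_dist n E u v = 0"
    have ex: "\<exists>d xs. is_walk n E xs u v \<and> length xs = d + 1"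
      by (rule exI[of _ 1], rule exI[of _ "[u,v]"], insert uv e, simp add: is_walk_cons2 is_walk_single)
    obtain xs where "is_walk n E xs u v" "length xs = 1"
      using LeastI_ex[OF ex] 0 unfolding graph_dist_def by auto
    thus False using uv by (cases xs) (auto simp: is_walk_def)
  qed
  thus ?thesis using le by simp
qed

lemma dist_nonadj:
  assumes c: "connected_graph n E" and "u < n" "v < n" "u \<noteq> v" "\<not> E u v"
  shows "graph_dist n E u v \<ge> 2"
proof (rule ccontr)
  assume nc: "\<not> ?thesis"
  obtain xs where w: "is_walk n E xs u v" and l: "length xs = graph_dist n E u v + 1"
    using dist_walk[OF c assms(2,3)] by blast
  have "length xs = 1 \<or> length xs = 2" using l nc by linarith
  thus False
  proof
    assume "length xs = 1"
    then obtain a where "xs = [a]" by (cases xs) auto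
    thus False using w assms by (simp add: is_walk_single)
  next
    assume "length xs = 2"
    then obtain a b where "xs = [a, b]" by (cases xs; cases "tl xs") auto
    thus False using w assms by (simp add: is_walk_cons2 is_walk_single)
  qed
qed




lemma sum_support_reindex:
  fixes h :: "nat \<Rightarrow> real" and F :: "nat \<Rightarrow> real"
  assumes inj: "inj_on f K" and img: "f ` K \<subseteq> {0..<n}" and fin: "finite K"
  shows "(\<Sum>p\<in>{0..<n}. (if p \<in> f ` K then h (the_inv_into K f p) else 0) * F p)
       = (\<Sum>i\<in>K. h i * F (f i))"
proof -
  have "(\<Sum>p\<in>{0..<n}. (if p \<in> f ` K then h (the_inv_into K f p) else 0) * F p)
      = (\<Sum>p\<in>f ` K. (if p \<in> f ` K then h (the_inv_into K f p) else 0) * F p)"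
    by (rule sum.mono_neutral_right, insert img, auto)
  also have "\<dots> = (\<Sum>i\<in>K. (if f i \<in> f ` K then h (the_inv_into K f (f i)) else 0) * F (f i))"
    by (rule sum.reindex[OF inj, unfolded comp_def])
  also have "\<dots> = (\<Sum>i\<in>K. h i * F (f i))"
    by (rule sum.cong[OF refl], simp add: the_inv_into_f_f[OF inj])
  finally show ?thesis .
qed

definition qf :: "nat list list \<Rightarrow> int list \<Rightarrow> int list \<Rightarrow> int" where
  "qf tab u w = (\<Sum>i<length u. \<Sum>j<length u. u!i * w!j * (1000 * int (tab!i!j) + (if i = j then 569 else 0)))"

lemma quad2_pos:
  fixes al be ga a b :: real
  assumes "al > 0" "al * ga > be^2" "(a, b) \<noteq> (0, 0)"
  shows "a^2 * al + 2 * a * b * be + b^2 * ga > 0"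
proof -
  have "al * (a^2 * al + 2 * a * b * be + b^2 * ga) = (al * a + be * b)^2 + (al * ga - be^2) * b^2"
    by (simp add: power2_eq_square algebra_simps)
  also have "\<dots> > 0"
  proof (cases "b = 0")
    case True
    hence "a \<noteq> 0" using assms by auto
    thus ?thesis using True assms by simp
  next
    case False
    thus ?thesis using assms by (intro add_nonneg_pos) auto
  qed
  finally show ?thesis using assms(1) by (simp add: zero_less_mult_iff)
qed

lemma cert:
  assumes sg: "simple_graph n E" and c: "connected_graph n E"
    and lam: "lambda_k 2 (dist_matrix n E) \<le> -569/1000"
    and inj: "inj_on f {0..<k}" and img: "f ` {0..<k} \<subseteq> {0..<n}"
    and lu: "length u = k" and lw: "length w = k"
    and tab: "\<And>i j. i < k \<Longrightarrow> j < k \<Longrightarrow> graph_dist n E (f i) (f j) = tab ! i ! j"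
    and p1: "qf tab u u > 0" and p2: "qf tab u u * qf tab w w > (qf tab u w)^2"
  shows False
proof -
  let ?A = "dist_matrix n E"
  let ?K = "{0..<k}"
  let ?g = "the_inv_into ?K f"
  have A: "?A \<in> carrier_mat n n" unfolding dist_matrix_def by simp
  have symA: "transpose_mat ?A = ?A"
  proof (rule eq_matI)
    fix i j assume "i < dim_row ?A" "j < dim_col ?A"
    hence ij: "i < n" "j < n" using A by auto
    show "transpose_mat ?A $$ (i, j) = ?A $$ (i, j)"
      using ij dist_sym[OF sg c ij(2) ij(1)] by (simp add: dist_matrix_def)
  qed (insert A, auto)
  define v1 where "v1 = vec n (\<lambda>p. if p \<in> f ` ?K then real_of_int (u ! ?g p) else 0)"
  define v2 where "v2 = vec n (\<lambda>p. if p \<in> f ` ?K then real_of_int (w ! ?g p) else 0)"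
  have v1: "v1 \<in> carrier_vec n" and v2: "v2 \<in> carrier_vec n" unfolding v1_def v2_def by auto
  define M where "M = (\<lambda>i j. 1000 * real (tab!i!j) + (if i = j then 569 else 0))"
  have fK: "f i < n" if "i < k" for i using img that by (auto simp: image_subset_iff)
  have tabsym: "tab!i!j = tab!j!i" if "i < k" "j < k" for i j
    using tab[OF that] tab[OF that(2,1)] dist_sym[OF sg c fK[OF that(1)] fK[OF that(2)]] by simp
  define Q where "Q = (\<lambda>x y :: nat \<Rightarrow> real. \<Sum>i\<in>?K. \<Sum>j\<in>?K. x i * y j * M i j)"
  have Qsym: "Q x y = Q y x" for x y
  proof -
    have "Q x y = (\<Sum>j\<in>?K. \<Sum>i\<in>?K. x i * y j * M i j)" unfolding Q_def by (rule sum.swap)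
    also have "\<dots> = Q y x" unfolding Q_def
      by (rule sum.cong[OF refl], rule sum.cong[OF refl], auto simp: M_def tabsym)
    finally show ?thesis .
  qed
  have Qlin: "Q (\<lambda>i. a * x i + b * y i) (\<lambda>i. a * x i + b * y i) = a^2 * Q x x + 2 * a * b * Q x y + b^2 * Q y y"
    for a b x y
  proof -
    have "Q (\<lambda>i. a * x i + b * y i) (\<lambda>i. a * x i + b * y i) = a^2 * Q x x + a * b * Q x y + a * b * Q y x + b^2 * Q y y"
    proof -
      have "Q (\<lambda>i. a * x i + b * y i) (\<lambda>i. a * x i + b * y i) = (\<Sum>i\<in>?K. \<Sum>j\<in>?K. a^2 * (x i * x j * M i j)
         + a*b*(x i * y j * M i j) + a*b*(y i * x j * M i j) + b^2*(y i * y j * M i j))"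
        unfolding Q_def by (intro sum.cong refl) (simp add: power2_eq_square algebra_simps)
      also have "\<dots> = a^2 * Q x x + a*b*Q x y + a*b*Q y x + b^2 * Q y y"
        unfolding Q_def by (simp add: sum.distrib sum_distrib_left)
      finally show ?thesis .
    qed
    thus ?thesis using Qsym[of y x] by simp
  qed
  have Qqf: "Q (\<lambda>i. real_of_int (x ! i)) (\<lambda>i. real_of_int (y ! i)) = real_of_int (qf tab x y)"
    if "length x = k" for x y
    unfolding Q_def qf_def M_def that of_int_sum atLeast0LessThan by (intro sum.cong refl) auto
  show False
  proof (rule quad_contra[OF A symA lam v1 v2])
    fix a b :: real assume ab: "(a, b) \<noteq> (0, 0)"
    define h where "h = (\<lambda>i. a * real_of_int (u ! i) + b * real_of_int (w ! i))"
    define z where "z = a \<cdot>\<^sub>v v1 + b \<cdot>\<^sub>v v2"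
    have z: "z = vec n (\<lambda>p. if p \<in> f ` ?K then h (?g p) else 0)"
      unfolding z_def v1_def v2_def h_def by (rule eq_vecI, auto)
    have zA: "(?A *\<^sub>v z) $ p = (\<Sum>r\<in>{0..<n}. (if r \<in> f ` ?K then h (?g r) else 0) * real (graph_dist n E p r))"
      if "p < n" for p
    proof -
      have "(?A *\<^sub>v z) $ p = (\<Sum>r\<in>{0..<n}. ?A $$ (p,r) * z $ r)"
        using that A by (simp add: z scalar_prod_def)
      also have "\<dots> = (\<Sum>r\<in>{0..<n}. (if r \<in> f ` ?K then h (?g r) else 0) * real (graph_dist n E p r))"
        by (rule sum.cong[OF refl], insert that, simp add: z dist_matrix_def)
      finally show ?thesis .
    qed
    have "z \<bullet> (?A *\<^sub>v z) = (\<Sum>p\<in>{0..<n}. (if p \<in> f ` ?K then h (?g p) else 0) * (?A *\<^sub>v z) $ p)"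
      unfolding scalar_prod_def using A by (simp add: z)
    also have "\<dots> = (\<Sum>i\<in>?K. h i * (?A *\<^sub>v z) $ f i)"
      by (rule sum_support_reindex[OF inj img], simp)
    also have "\<dots> = (\<Sum>i\<in>?K. h i * (\<Sum>j\<in>?K. h j * real (graph_dist n E (f i) (f j))))"
    proof (rule sum.cong[OF refl])
      fix i assume "i \<in> ?K" hence i: "i < k" by simp
      show "h i * (?A *\<^sub>v z) $ f i = h i * (\<Sum>j\<in>?K. h j * real (graph_dist n E (f i) (f j)))"
        using zA[OF fK[OF i]] sum_support_reindex[OF inj img, of h "\<lambda>r. real (graph_dist n E (f i) r)"] by simp
    qed
    finally have zAz: "z \<bullet> (?A *\<^sub>v z) = (\<Sum>i\<in>?K. h i * (\<Sum>j\<in>?K. h j * real (graph_dist n E (f i) (f j))))" .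
    have "z \<bullet> z = (\<Sum>p\<in>{0..<n}. (if p \<in> f ` ?K then h (?g p) else 0) * z $ p)"
      unfolding scalar_prod_def by (simp add: z)
    also have "\<dots> = (\<Sum>i\<in>?K. h i * z $ f i)"
      by (rule sum_support_reindex[OF inj img], simp)
    also have "\<dots> = (\<Sum>i\<in>?K. h i * h i)"
      by (rule sum.cong[OF refl], simp add: z fK the_inv_into_f_f[OF inj])
    finally have zz: "z \<bullet> z = (\<Sum>i\<in>?K. h i * h i)" .
    have "1000 * (z \<bullet> (?A *\<^sub>v z)) + 569 * (z \<bullet> z) = Q h h"
    proof -
      have "Q h h = (\<Sum>i\<in>?K. \<Sum>j\<in>?K. h i * h j * (1000 * real (graph_dist n E (f i) (f j))))
          + (\<Sum>i\<in>?K. \<Sum>j\<in>?K. h i * h j * (if i = j then 569 else 0))"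
        unfolding Q_def M_def sum.distrib[symmetric]
        by (rule sum.cong[OF refl], rule sum.cong[OF refl], simp add: tab distrib_left)
      also have "(\<Sum>i\<in>?K. \<Sum>j\<in>?K. h i * h j * (if i = j then 569 else 0)) = 569 * (\<Sum>i\<in>?K. h i * h i)"
        by (simp add: sum_distrib_left sum_distrib_right if_distrib mult.commute cong: if_cong)
      finally show ?thesis unfolding zAz zz by (simp add: sum_distrib_left algebra_simps)
    qed
    also have "Q h h = a^2 * real_of_int (qf tab u u) + 2 * a * b * real_of_int (qf tab u w)
        + b^2 * real_of_int (qf tab w w)"
      unfolding h_def Qlin Qqf[OF lu] Qqf[OF lw] ..
    also have "\<dots> > 0"
      by (rule quad2_pos[OF _ _ ab], insert p1 p2, simp, metis of_int_less_iff of_int_mult of_int_power)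
    finally have "1000 * (z \<bullet> (?A *\<^sub>v z)) + 569 * (z \<bullet> z) > 0" .
    thus "z \<bullet> (?A *\<^sub>v z) > -569/1000 * (z \<bullet> z)" by simp
  qed
qed






context
  fixes n :: nat and E :: "nat \<Rightarrow> nat \<Rightarrow> bool" and f :: "nat \<Rightarrow> nat" and k :: nat and H :: "nat \<Rightarrow> nat \<Rightarrow> bool"
  assumes sg: "simple_graph n E" and cg: "connected_graph n E"
    and inj: "inj_on f {0..<k}" and img: "f ` {0..<k} \<subseteq> {0..<n}"
    and iff: "\<forall>i<k. \<forall>j<k. E (f i) (f j) \<longleftrightarrow> H i j"
begin

lemma ind_lt: "i < k \<Longrightarrow> f i < n" using img by (auto simp: image_subset_iff)

lemma ind_E: "i < k \<Longrightarrow> j < k \<Longrightarrow> H i j \<Longrightarrow> E (f i) (f j)"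
  using iff by blast

lemma ind_adj: "i < k \<Longrightarrow> j < k \<Longrightarrow> H i j \<Longrightarrow> graph_dist n E (f i) (f j) = 1"
  by (rule dist_adj[OF sg ind_E])

lemma ind_ge2:
  assumes ij: "i < k" "j < k" "i \<noteq> j" "\<not> H i j"
  shows "2 \<le> graph_dist n E (f i) (f j)"
proof (rule dist_nonadj[OF cg])
  show "f i < n" "f j < n" using ind_lt ij by auto
  have "i \<in> {0..<k}" "j \<in> {0..<k}" using ij by auto
  thus "f i \<noteq> f j" using inj_onD[OF inj] ij(3) by blast
  show "\<not> E (f i) (f j)" using iff[rule_format, OF ij(1) ij(2)] ij(4) by simp
qed

lemma ind_w2: "i < k \<Longrightarrow> m < k \<Longrightarrow> j < k \<Longrightarrow> H i m \<Longrightarrow> H m j \<Longrightarrow> graph_dist n E (f i) (f j) \<le> 2"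
  using dist_le[of n E "[f i, f m, f j]" "f i" "f j"] ind_E[of i m] ind_E[of m j] ind_lt[of i] ind_lt[of m] ind_lt[of j]
  by (simp add: is_walk_cons2 is_walk_single)

lemma ind_w3: "i < k \<Longrightarrow> a < k \<Longrightarrow> b < k \<Longrightarrow> j < k \<Longrightarrow> H i a \<Longrightarrow> H a b \<Longrightarrow> H b j
   \<Longrightarrow> graph_dist n E (f i) (f j) \<le> 3"
  using dist_le[of n E "[f i, f a, f b, f j]" "f i" "f j"] ind_E[of i a] ind_E[of a b] ind_E[of b j]
    ind_lt[of i] ind_lt[of a] ind_lt[of b] ind_lt[of j]
  by (simp add: is_walk_cons2 is_walk_single)

lemma ind_w4: "i < k \<Longrightarrow> a < k \<Longrightarrow> b < k \<Longrightarrow> d < k \<Longrightarrow> j < k \<Longrightarrow> H i a \<Longrightarrow> H a b \<Longrightarrow> H b d \<Longrightarrow> H d j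
   \<Longrightarrow> graph_dist n E (f i) (f j) \<le> 4"
  using dist_le[of n E "[f i, f a, f b, f d, f j]" "f i" "f j"] ind_E[of i a] ind_E[of a b] ind_E[of b d] ind_E[of d j]
    ind_lt[of i] ind_lt[of a] ind_lt[of b] ind_lt[of d] ind_lt[of j]
  by (simp add: is_walk_cons2 is_walk_single)

lemma ind_sym: "i < k \<Longrightarrow> j < k \<Longrightarrow> graph_dist n E (f j) (f i) = graph_dist n E (f i) (f j)"
  by (rule dist_sym[OF sg cg]; rule ind_lt)

lemma ind_self: "i < k \<Longrightarrow> graph_dist n E (f i) (f i) = 0"
  by (rule dist_self, rule ind_lt)

end

lemma less5: "(i::nat) < 5 \<Longrightarrow> i = 0 \<or> i = 1 \<or> i = 2 \<or> i = 3 \<or> i = 4" by (simp add: eval_nat_numeral less_Suc_eq)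
lemma less4: "(i::nat) < 4 \<Longrightarrow> i = 0 \<or> i = 1 \<or> i = 2 \<or> i = 3" by (simp add: eval_nat_numeral less_Suc_eq)



lemma no_C4:
  assumes sg: "simple_graph n E" and cg: "connected_graph n E"
    and lam: "lambda_k 2 (dist_matrix n E) \<le> -569/1000"
  shows "\<not> induced_subgraph_of 4 C4 n E"
proof
  assume "induced_subgraph_of 4 C4 n E"
  then obtain f where inj: "inj_on f {0..<4}" and img: "f ` {0..<4} \<subseteq> {0..<n}"
    and iff: "\<forall>i<4. \<forall>j<4. E (f i) (f j) \<longleftrightarrow> C4 i j" unfolding induced_subgraph_of_def by blast
  note L = sg cg inj img iff
  have z0: "graph_dist n E (f 0) (f 0) = 0" by (rule ind_self[OF L]) simp
  have z1: "graph_dist n E (f 1) (f 1) = 0" by (rule ind_self[OF L]) simp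
  have z2: "graph_dist n E (f 2) (f 2) = 0" by (rule ind_self[OF L]) simp
  have z3: "graph_dist n E (f 3) (f 3) = 0" by (rule ind_self[OF L]) simp
  have s10: "graph_dist n E (f 1) (f 0) = graph_dist n E (f 0) (f 1)" by (rule ind_sym[OF L]) simp_all
  have d01: "graph_dist n E (f 0) (f 1) = 1" by (rule ind_adj[OF L]) (simp_all add: C4_def edges_of_def)
  have s20: "graph_dist n E (f 2) (f 0) = graph_dist n E (f 0) (f 2)" by (rule ind_sym[OF L]) simp_all
  have g02: "2 \<le> graph_dist n E (f 0) (f 2)" by (rule ind_ge2[OF L]) (simp_all add: C4_def edges_of_def)
  have l02: "graph_dist n E (f 0) (f 2) \<le> 2" by (rule ind_w2[OF L, of 0 1 2]) (simp_all add: C4_def edges_of_def)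
  have d02: "graph_dist n E (f 0) (f 2) = 2" using g02 l02 by linarith
  have s30: "graph_dist n E (f 3) (f 0) = graph_dist n E (f 0) (f 3)" by (rule ind_sym[OF L]) simp_all
  have d03: "graph_dist n E (f 0) (f 3) = 1" by (rule ind_adj[OF L]) (simp_all add: C4_def edges_of_def)
  have s21: "graph_dist n E (f 2) (f 1) = graph_dist n E (f 1) (f 2)" by (rule ind_sym[OF L]) simp_all
  have d12: "graph_dist n E (f 1) (f 2) = 1" by (rule ind_adj[OF L]) (simp_all add: C4_def edges_of_def)
  have s31: "graph_dist n E (f 3) (f 1) = graph_dist n E (f 1) (f 3)" by (rule ind_sym[OF L]) simp_all
  have g13: "2 \<le> graph_dist n E (f 1) (f 3)" by (rule ind_ge2[OF L]) (simp_all add: C4_def edges_of_def)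
  have l13: "graph_dist n E (f 1) (f 3) \<le> 2" by (rule ind_w2[OF L, of 1 0 3]) (simp_all add: C4_def edges_of_def)
  have d13: "graph_dist n E (f 1) (f 3) = 2" using g13 l13 by linarith
  have s32: "graph_dist n E (f 3) (f 2) = graph_dist n E (f 2) (f 3)" by (rule ind_sym[OF L]) simp_all
  have d23: "graph_dist n E (f 2) (f 3) = 1" by (rule ind_adj[OF L]) (simp_all add: C4_def edges_of_def)
  have c0: "False"
  proof -
    note eqs = TrueI
    have tab: "\<And>i j. i < 4 \<Longrightarrow> j < 4 \<Longrightarrow> graph_dist n E (f i) (f j) = [[0,1,2,1],[1,0,1,2],[2,1,0,1],[1,2,1,0]] ! i ! j"
      apply (drule less4, drule less4)
      apply (elim disjE)
      apply (simp_all only: eqs z0 z1 z2 z3 s10 d01 s20 d02 s30 d03 s21 d12 s31 d13 s32 d23)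
      apply simp_all
      done
    show False
      using cert[where u = "[5,5,5,5]" and w = "[-5,5,-5,5]", OF sg cg lam inj img _ _ tab]
      by (simp add: qf_def lessThan_nat_numeral)
  qed
  show False using  c0 by blast
qed

lemma no_C5:
  assumes sg: "simple_graph n E" and cg: "connected_graph n E"
    and lam: "lambda_k 2 (dist_matrix n E) \<le> -569/1000"
  shows "\<not> induced_subgraph_of 5 C5 n E"
proof
  assume "induced_subgraph_of 5 C5 n E"
  then obtain f where inj: "inj_on f {0..<5}" and img: "f ` {0..<5} \<subseteq> {0..<n}"
    and iff: "\<forall>i<5. \<forall>j<5. E (f i) (f j) \<longleftrightarrow> C5 i j" unfolding induced_subgraph_of_def by blast
  note L = sg cg inj img iff
  have z0: "graph_dist n E (f 0) (f 0) = 0" by (rule ind_self[OF L]) simp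
  have z1: "graph_dist n E (f 1) (f 1) = 0" by (rule ind_self[OF L]) simp
  have z2: "graph_dist n E (f 2) (f 2) = 0" by (rule ind_self[OF L]) simp
  have z3: "graph_dist n E (f 3) (f 3) = 0" by (rule ind_self[OF L]) simp
  have z4: "graph_dist n E (f 4) (f 4) = 0" by (rule ind_self[OF L]) simp
  have s10: "graph_dist n E (f 1) (f 0) = graph_dist n E (f 0) (f 1)" by (rule ind_sym[OF L]) simp_all
  have d01: "graph_dist n E (f 0) (f 1) = 1" by (rule ind_adj[OF L]) (simp_all add: C5_def edges_of_def)
  have s20: "graph_dist n E (f 2) (f 0) = graph_dist n E (f 0) (f 2)" by (rule ind_sym[OF L]) simp_all
  have g02: "2 \<le> graph_dist n E (f 0) (f 2)" by (rule ind_ge2[OF L]) (simp_all add: C5_def edges_of_def)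
  have l02: "graph_dist n E (f 0) (f 2) \<le> 2" by (rule ind_w2[OF L, of 0 1 2]) (simp_all add: C5_def edges_of_def)
  have d02: "graph_dist n E (f 0) (f 2) = 2" using g02 l02 by linarith
  have s30: "graph_dist n E (f 3) (f 0) = graph_dist n E (f 0) (f 3)" by (rule ind_sym[OF L]) simp_all
  have g03: "2 \<le> graph_dist n E (f 0) (f 3)" by (rule ind_ge2[OF L]) (simp_all add: C5_def edges_of_def)
  have l03: "graph_dist n E (f 0) (f 3) \<le> 2" by (rule ind_w2[OF L, of 0 4 3]) (simp_all add: C5_def edges_of_def)
  have d03: "graph_dist n E (f 0) (f 3) = 2" using g03 l03 by linarith
  have s40: "graph_dist n E (f 4) (f 0) = graph_dist n E (f 0) (f 4)" by (rule ind_sym[OF L]) simp_all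
  have d04: "graph_dist n E (f 0) (f 4) = 1" by (rule ind_adj[OF L]) (simp_all add: C5_def edges_of_def)
  have s21: "graph_dist n E (f 2) (f 1) = graph_dist n E (f 1) (f 2)" by (rule ind_sym[OF L]) simp_all
  have d12: "graph_dist n E (f 1) (f 2) = 1" by (rule ind_adj[OF L]) (simp_all add: C5_def edges_of_def)
  have s31: "graph_dist n E (f 3) (f 1) = graph_dist n E (f 1) (f 3)" by (rule ind_sym[OF L]) simp_all
  have g13: "2 \<le> graph_dist n E (f 1) (f 3)" by (rule ind_ge2[OF L]) (simp_all add: C5_def edges_of_def)
  have l13: "graph_dist n E (f 1) (f 3) \<le> 2" by (rule ind_w2[OF L, of 1 2 3]) (simp_all add: C5_def edges_of_def)
  have d13: "graph_dist n E (f 1) (f 3) = 2" using g13 l13 by linarith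
  have s41: "graph_dist n E (f 4) (f 1) = graph_dist n E (f 1) (f 4)" by (rule ind_sym[OF L]) simp_all
  have g14: "2 \<le> graph_dist n E (f 1) (f 4)" by (rule ind_ge2[OF L]) (simp_all add: C5_def edges_of_def)
  have l14: "graph_dist n E (f 1) (f 4) \<le> 2" by (rule ind_w2[OF L, of 1 0 4]) (simp_all add: C5_def edges_of_def)
  have d14: "graph_dist n E (f 1) (f 4) = 2" using g14 l14 by linarith
  have s32: "graph_dist n E (f 3) (f 2) = graph_dist n E (f 2) (f 3)" by (rule ind_sym[OF L]) simp_all
  have d23: "graph_dist n E (f 2) (f 3) = 1" by (rule ind_adj[OF L]) (simp_all add: C5_def edges_of_def)
  have s42: "graph_dist n E (f 4) (f 2) = graph_dist n E (f 2) (f 4)" by (rule ind_sym[OF L]) simp_all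
  have g24: "2 \<le> graph_dist n E (f 2) (f 4)" by (rule ind_ge2[OF L]) (simp_all add: C5_def edges_of_def)
  have l24: "graph_dist n E (f 2) (f 4) \<le> 2" by (rule ind_w2[OF L, of 2 3 4]) (simp_all add: C5_def edges_of_def)
  have d24: "graph_dist n E (f 2) (f 4) = 2" using g24 l24 by linarith
  have s43: "graph_dist n E (f 4) (f 3) = graph_dist n E (f 3) (f 4)" by (rule ind_sym[OF L]) simp_all
  have d34: "graph_dist n E (f 3) (f 4) = 1" by (rule ind_adj[OF L]) (simp_all add: C5_def edges_of_def)
  have c0: "False"
  proof -
    note eqs = TrueI
    have tab: "\<And>i j. i < 5 \<Longrightarrow> j < 5 \<Longrightarrow> graph_dist n E (f i) (f j) = [[0,1,2,2,1],[1,0,1,2,2],[2,1,0,1,2],[2,2,1,0,1],[1,2,2,1,0]] ! i ! j"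
      apply (drule less5, drule less5)
      apply (elim disjE)
      apply (simp_all only: eqs z0 z1 z2 z3 z4 s10 d01 s20 d02 s30 d03 s40 d04 s21 d12 s31 d13 s41 d14 s32 d23 s42 d24 s43 d34)
      apply simp_all
      done
    show False
      using cert[where u = "[4,4,4,4,4]" and w = "[-6,6,-3,-1,5]", OF sg cg lam inj img _ _ tab]
      by (simp add: qf_def lessThan_nat_numeral)
  qed
  show False using  c0 by blast
qed

lemma no_P5:
  assumes sg: "simple_graph n E" and cg: "connected_graph n E"
    and lam: "lambda_k 2 (dist_matrix n E) \<le> -569/1000"
  shows "\<not> induced_subgraph_of 5 P5 n E"
proof
  assume "induced_subgraph_of 5 P5 n E"
  then obtain f where inj: "inj_on f {0..<5}" and img: "f ` {0..<5} \<subseteq> {0..<n}"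
    and iff: "\<forall>i<5. \<forall>j<5. E (f i) (f j) \<longleftrightarrow> P5 i j" unfolding induced_subgraph_of_def by blast
  note L = sg cg inj img iff
  have z0: "graph_dist n E (f 0) (f 0) = 0" by (rule ind_self[OF L]) simp
  have z1: "graph_dist n E (f 1) (f 1) = 0" by (rule ind_self[OF L]) simp
  have z2: "graph_dist n E (f 2) (f 2) = 0" by (rule ind_self[OF L]) simp
  have z3: "graph_dist n E (f 3) (f 3) = 0" by (rule ind_self[OF L]) simp
  have z4: "graph_dist n E (f 4) (f 4) = 0" by (rule ind_self[OF L]) simp
  have s10: "graph_dist n E (f 1) (f 0) = graph_dist n E (f 0) (f 1)" by (rule ind_sym[OF L]) simp_all
  have d01: "graph_dist n E (f 0) (f 1) = 1" by (rule ind_adj[OF L]) (simp_all add: P5_def edges_of_def)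
  have s20: "graph_dist n E (f 2) (f 0) = graph_dist n E (f 0) (f 2)" by (rule ind_sym[OF L]) simp_all
  have g02: "2 \<le> graph_dist n E (f 0) (f 2)" by (rule ind_ge2[OF L]) (simp_all add: P5_def edges_of_def)
  have l02: "graph_dist n E (f 0) (f 2) \<le> 2" by (rule ind_w2[OF L, of 0 1 2]) (simp_all add: P5_def edges_of_def)
  have d02: "graph_dist n E (f 0) (f 2) = 2" using g02 l02 by linarith
  have s30: "graph_dist n E (f 3) (f 0) = graph_dist n E (f 0) (f 3)" by (rule ind_sym[OF L]) simp_all
  have g03: "2 \<le> graph_dist n E (f 0) (f 3)" by (rule ind_ge2[OF L]) (simp_all add: P5_def edges_of_def)
  have l03: "graph_dist n E (f 0) (f 3) \<le> 3" by (rule ind_w3[OF L, of 0 1 2 3]) (simp_all add: P5_def edges_of_def)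
  have d03: "graph_dist n E (f 0) (f 3) = 2 \<or> graph_dist n E (f 0) (f 3) = 3" using g03 l03 by linarith
  have s40: "graph_dist n E (f 4) (f 0) = graph_dist n E (f 0) (f 4)" by (rule ind_sym[OF L]) simp_all
  have g04: "2 \<le> graph_dist n E (f 0) (f 4)" by (rule ind_ge2[OF L]) (simp_all add: P5_def edges_of_def)
  have l04: "graph_dist n E (f 0) (f 4) \<le> 4" by (rule ind_w4[OF L, of 0 1 2 3 4]) (simp_all add: P5_def edges_of_def)
  have d04: "graph_dist n E (f 0) (f 4) = 2 \<or> graph_dist n E (f 0) (f 4) = 3 \<or> graph_dist n E (f 0) (f 4) = 4" using g04 l04 by linarith
  have s21: "graph_dist n E (f 2) (f 1) = graph_dist n E (f 1) (f 2)" by (rule ind_sym[OF L]) simp_all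
  have d12: "graph_dist n E (f 1) (f 2) = 1" by (rule ind_adj[OF L]) (simp_all add: P5_def edges_of_def)
  have s31: "graph_dist n E (f 3) (f 1) = graph_dist n E (f 1) (f 3)" by (rule ind_sym[OF L]) simp_all
  have g13: "2 \<le> graph_dist n E (f 1) (f 3)" by (rule ind_ge2[OF L]) (simp_all add: P5_def edges_of_def)
  have l13: "graph_dist n E (f 1) (f 3) \<le> 2" by (rule ind_w2[OF L, of 1 2 3]) (simp_all add: P5_def edges_of_def)
  have d13: "graph_dist n E (f 1) (f 3) = 2" using g13 l13 by linarith
  have s41: "graph_dist n E (f 4) (f 1) = graph_dist n E (f 1) (f 4)" by (rule ind_sym[OF L]) simp_all
  have g14: "2 \<le> graph_dist n E (f 1) (f 4)" by (rule ind_ge2[OF L]) (simp_all add: P5_def edges_of_def)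
  have l14: "graph_dist n E (f 1) (f 4) \<le> 3" by (rule ind_w3[OF L, of 1 2 3 4]) (simp_all add: P5_def edges_of_def)
  have d14: "graph_dist n E (f 1) (f 4) = 2 \<or> graph_dist n E (f 1) (f 4) = 3" using g14 l14 by linarith
  have s32: "graph_dist n E (f 3) (f 2) = graph_dist n E (f 2) (f 3)" by (rule ind_sym[OF L]) simp_all
  have d23: "graph_dist n E (f 2) (f 3) = 1" by (rule ind_adj[OF L]) (simp_all add: P5_def edges_of_def)
  have s42: "graph_dist n E (f 4) (f 2) = graph_dist n E (f 2) (f 4)" by (rule ind_sym[OF L]) simp_all
  have g24: "2 \<le> graph_dist n E (f 2) (f 4)" by (rule ind_ge2[OF L]) (simp_all add: P5_def edges_of_def)
  have l24: "graph_dist n E (f 2) (f 4) \<le> 2" by (rule ind_w2[OF L, of 2 3 4]) (simp_all add: P5_def edges_of_def)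
  have d24: "graph_dist n E (f 2) (f 4) = 2" using g24 l24 by linarith
  have s43: "graph_dist n E (f 4) (f 3) = graph_dist n E (f 3) (f 4)" by (rule ind_sym[OF L]) simp_all
  have d34: "graph_dist n E (f 3) (f 4) = 1" by (rule ind_adj[OF L]) (simp_all add: P5_def edges_of_def)
  have c0: "graph_dist n E (f 0) (f 3) = 2 \<Longrightarrow> graph_dist n E (f 0) (f 4) = 2 \<Longrightarrow> graph_dist n E (f 1) (f 4) = 2 \<Longrightarrow> False"
  proof -
    assume eqs: "graph_dist n E (f 0) (f 3) = 2" "graph_dist n E (f 0) (f 4) = 2" "graph_dist n E (f 1) (f 4) = 2"
    have tab: "\<And>i j. i < 5 \<Longrightarrow> j < 5 \<Longrightarrow> graph_dist n E (f i) (f j) = [[0,1,2,2,2],[1,0,1,2,2],[2,1,0,1,2],[2,2,1,0,1],[2,2,2,1,0]] ! i ! j"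
      apply (drule less5, drule less5)
      apply (elim disjE)
      apply (simp_all only: eqs z0 z1 z2 z3 z4 s10 d01 s20 d02 s30 s40 s21 d12 s31 d13 s41 s32 d23 s42 d24 s43 d34)
      apply simp_all
      done
    show False
      using cert[where u = "[5,4,4,4,5]" and w = "[2,-5,5,-5,2]", OF sg cg lam inj img _ _ tab]
      by (simp add: qf_def lessThan_nat_numeral)
  qed
  have c1: "graph_dist n E (f 0) (f 3) = 2 \<Longrightarrow> graph_dist n E (f 0) (f 4) = 2 \<Longrightarrow> graph_dist n E (f 1) (f 4) = 3 \<Longrightarrow> False"
  proof -
    assume eqs: "graph_dist n E (f 0) (f 3) = 2" "graph_dist n E (f 0) (f 4) = 2" "graph_dist n E (f 1) (f 4) = 3"
    have tab: "\<And>i j. i < 5 \<Longrightarrow> j < 5 \<Longrightarrow> graph_dist n E (f i) (f j) = [[0,1,2,2,2],[1,0,1,2,3],[2,1,0,1,2],[2,2,1,0,1],[2,3,2,1,0]] ! i ! j"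
      apply (drule less5, drule less5)
      apply (elim disjE)
      apply (simp_all only: eqs z0 z1 z2 z3 z4 s10 d01 s20 d02 s30 s40 s21 d12 s31 d13 s41 s32 d23 s42 d24 s43 d34)
      apply simp_all
      done
    show False
      using cert[where u = "[4,5,4,4,5]" and w = "[5,-6,5,-1,-2]", OF sg cg lam inj img _ _ tab]
      by (simp add: qf_def lessThan_nat_numeral)
  qed
  have c2: "graph_dist n E (f 0) (f 3) = 2 \<Longrightarrow> graph_dist n E (f 0) (f 4) = 3 \<Longrightarrow> graph_dist n E (f 1) (f 4) = 2 \<Longrightarrow> False"
  proof -
    assume eqs: "graph_dist n E (f 0) (f 3) = 2" "graph_dist n E (f 0) (f 4) = 3" "graph_dist n E (f 1) (f 4) = 2"
    have tab: "\<And>i j. i < 5 \<Longrightarrow> j < 5 \<Longrightarrow> graph_dist n E (f i) (f j) = [[0,1,2,2,3],[1,0,1,2,2],[2,1,0,1,2],[2,2,1,0,1],[3,2,2,1,0]] ! i ! j"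
      apply (drule less5, drule less5)
      apply (elim disjE)
      apply (simp_all only: eqs z0 z1 z2 z3 z4 s10 d01 s20 d02 s30 s40 s21 d12 s31 d13 s41 s32 d23 s42 d24 s43 d34)
      apply simp_all
      done
    show False
      using cert[where u = "[5,4,4,4,5]" and w = "[3,-6,4,-6,3]", OF sg cg lam inj img _ _ tab]
      by (simp add: qf_def lessThan_nat_numeral)
  qed
  have c3: "graph_dist n E (f 0) (f 3) = 2 \<Longrightarrow> graph_dist n E (f 0) (f 4) = 3 \<Longrightarrow> graph_dist n E (f 1) (f 4) = 3 \<Longrightarrow> False"
  proof -
    assume eqs: "graph_dist n E (f 0) (f 3) = 2" "graph_dist n E (f 0) (f 4) = 3" "graph_dist n E (f 1) (f 4) = 3"
    have tab: "\<And>i j. i < 5 \<Longrightarrow> j < 5 \<Longrightarrow> graph_dist n E (f i) (f j) = [[0,1,2,2,3],[1,0,1,2,3],[2,1,0,1,2],[2,2,1,0,1],[3,3,2,1,0]] ! i ! j"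
      apply (drule less5, drule less5)
      apply (elim disjE)
      apply (simp_all only: eqs z0 z1 z2 z3 z4 s10 d01 s20 d02 s30 s40 s21 d12 s31 d13 s41 s32 d23 s42 d24 s43 d34)
      apply simp_all
      done
    show False
      using cert[where u = "[5,4,4,4,5]" and w = "[3,-6,6,-5,1]", OF sg cg lam inj img _ _ tab]
      by (simp add: qf_def lessThan_nat_numeral)
  qed
  have c4: "graph_dist n E (f 0) (f 3) = 2 \<Longrightarrow> graph_dist n E (f 0) (f 4) = 4 \<Longrightarrow> graph_dist n E (f 1) (f 4) = 2 \<Longrightarrow> False"
  proof -
    assume eqs: "graph_dist n E (f 0) (f 3) = 2" "graph_dist n E (f 0) (f 4) = 4" "graph_dist n E (f 1) (f 4) = 2"
    have tab: "\<And>i j. i < 5 \<Longrightarrow> j < 5 \<Longrightarrow> graph_dist n E (f i) (f j) = [[0,1,2,2,4],[1,0,1,2,2],[2,1,0,1,2],[2,2,1,0,1],[4,2,2,1,0]] ! i ! j"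
      apply (drule less5, drule less5)
      apply (elim disjE)
      apply (simp_all only: eqs z0 z1 z2 z3 z4 s10 d01 s20 d02 s30 s40 s21 d12 s31 d13 s41 s32 d23 s42 d24 s43 d34)
      apply simp_all
      done
    show False
      using cert[where u = "[5,4,4,4,5]" and w = "[3,-6,3,-6,3]", OF sg cg lam inj img _ _ tab]
      by (simp add: qf_def lessThan_nat_numeral)
  qed
  have c5: "graph_dist n E (f 0) (f 3) = 2 \<Longrightarrow> graph_dist n E (f 0) (f 4) = 4 \<Longrightarrow> graph_dist n E (f 1) (f 4) = 3 \<Longrightarrow> False"
  proof -
    assume eqs: "graph_dist n E (f 0) (f 3) = 2" "graph_dist n E (f 0) (f 4) = 4" "graph_dist n E (f 1) (f 4) = 3"
    have tab: "\<And>i j. i < 5 \<Longrightarrow> j < 5 \<Longrightarrow> graph_dist n E (f i) (f j) = [[0,1,2,2,4],[1,0,1,2,3],[2,1,0,1,2],[2,2,1,0,1],[4,3,2,1,0]] ! i ! j"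
      apply (drule less5, drule less5)
      apply (elim disjE)
      apply (simp_all only: eqs z0 z1 z2 z3 z4 s10 d01 s20 d02 s30 s40 s21 d12 s31 d13 s41 s32 d23 s42 d24 s43 d34)
      apply simp_all
      done
    show False
      using cert[where u = "[5,4,4,4,6]" and w = "[3,-6,5,-6,2]", OF sg cg lam inj img _ _ tab]
      by (simp add: qf_def lessThan_nat_numeral)
  qed
  have c6: "graph_dist n E (f 0) (f 3) = 3 \<Longrightarrow> graph_dist n E (f 0) (f 4) = 2 \<Longrightarrow> graph_dist n E (f 1) (f 4) = 2 \<Longrightarrow> False"
  proof -
    assume eqs: "graph_dist n E (f 0) (f 3) = 3" "graph_dist n E (f 0) (f 4) = 2" "graph_dist n E (f 1) (f 4) = 2"
    have tab: "\<And>i j. i < 5 \<Longrightarrow> j < 5 \<Longrightarrow> graph_dist n E (f i) (f j) = [[0,1,2,3,2],[1,0,1,2,2],[2,1,0,1,2],[3,2,1,0,1],[2,2,2,1,0]] ! i ! j"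
      apply (drule less5, drule less5)
      apply (elim disjE)
      apply (simp_all only: eqs z0 z1 z2 z3 z4 s10 d01 s20 d02 s30 s40 s21 d12 s31 d13 s41 s32 d23 s42 d24 s43 d34)
      apply simp_all
      done
    show False
      using cert[where u = "[5,4,4,5,4]" and w = "[-2,-1,5,-6,5]", OF sg cg lam inj img _ _ tab]
      by (simp add: qf_def lessThan_nat_numeral)
  qed
  have c7: "graph_dist n E (f 0) (f 3) = 3 \<Longrightarrow> graph_dist n E (f 0) (f 4) = 2 \<Longrightarrow> graph_dist n E (f 1) (f 4) = 3 \<Longrightarrow> False"
  proof -
    assume eqs: "graph_dist n E (f 0) (f 3) = 3" "graph_dist n E (f 0) (f 4) = 2" "graph_dist n E (f 1) (f 4) = 3"
    have tab: "\<And>i j. i < 5 \<Longrightarrow> j < 5 \<Longrightarrow> graph_dist n E (f i) (f j) = [[0,1,2,3,2],[1,0,1,2,3],[2,1,0,1,2],[3,2,1,0,1],[2,3,2,1,0]] ! i ! j"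
      apply (drule less5, drule less5)
      apply (elim disjE)
      apply (simp_all only: eqs z0 z1 z2 z3 z4 s10 d01 s20 d02 s30 s40 s21 d12 s31 d13 s41 s32 d23 s42 d24 s43 d34)
      apply simp_all
      done
    show False
      using cert[where u = "[5,4,4,4,5]" and w = "[-5,5,0,-5,5]", OF sg cg lam inj img _ _ tab]
      by (simp add: qf_def lessThan_nat_numeral)
  qed
  have c8: "graph_dist n E (f 0) (f 3) = 3 \<Longrightarrow> graph_dist n E (f 0) (f 4) = 3 \<Longrightarrow> graph_dist n E (f 1) (f 4) = 2 \<Longrightarrow> False"
  proof -
    assume eqs: "graph_dist n E (f 0) (f 3) = 3" "graph_dist n E (f 0) (f 4) = 3" "graph_dist n E (f 1) (f 4) = 2"
    have tab: "\<And>i j. i < 5 \<Longrightarrow> j < 5 \<Longrightarrow> graph_dist n E (f i) (f j) = [[0,1,2,3,3],[1,0,1,2,2],[2,1,0,1,2],[3,2,1,0,1],[3,2,2,1,0]] ! i ! j"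
      apply (drule less5, drule less5)
      apply (elim disjE)
      apply (simp_all only: eqs z0 z1 z2 z3 z4 s10 d01 s20 d02 s30 s40 s21 d12 s31 d13 s41 s32 d23 s42 d24 s43 d34)
      apply simp_all
      done
    show False
      using cert[where u = "[5,4,4,4,5]" and w = "[1,-5,6,-6,3]", OF sg cg lam inj img _ _ tab]
      by (simp add: qf_def lessThan_nat_numeral)
  qed
  have c9: "graph_dist n E (f 0) (f 3) = 3 \<Longrightarrow> graph_dist n E (f 0) (f 4) = 3 \<Longrightarrow> graph_dist n E (f 1) (f 4) = 3 \<Longrightarrow> False"
  proof -
    assume eqs: "graph_dist n E (f 0) (f 3) = 3" "graph_dist n E (f 0) (f 4) = 3" "graph_dist n E (f 1) (f 4) = 3"
    have tab: "\<And>i j. i < 5 \<Longrightarrow> j < 5 \<Longrightarrow> graph_dist n E (f i) (f j) = [[0,1,2,3,3],[1,0,1,2,3],[2,1,0,1,2],[3,2,1,0,1],[3,3,2,1,0]] ! i ! j"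
      apply (drule less5, drule less5)
      apply (elim disjE)
      apply (simp_all only: eqs z0 z1 z2 z3 z4 s10 d01 s20 d02 s30 s40 s21 d12 s31 d13 s41 s32 d23 s42 d24 s43 d34)
      apply simp_all
      done
    show False
      using cert[where u = "[5,4,4,4,5]" and w = "[-4,6,0,-6,4]", OF sg cg lam inj img _ _ tab]
      by (simp add: qf_def lessThan_nat_numeral)
  qed
  have c10: "graph_dist n E (f 0) (f 3) = 3 \<Longrightarrow> graph_dist n E (f 0) (f 4) = 4 \<Longrightarrow> graph_dist n E (f 1) (f 4) = 2 \<Longrightarrow> False"
  proof -
    assume eqs: "graph_dist n E (f 0) (f 3) = 3" "graph_dist n E (f 0) (f 4) = 4" "graph_dist n E (f 1) (f 4) = 2"
    have tab: "\<And>i j. i < 5 \<Longrightarrow> j < 5 \<Longrightarrow> graph_dist n E (f i) (f j) = [[0,1,2,3,4],[1,0,1,2,2],[2,1,0,1,2],[3,2,1,0,1],[4,2,2,1,0]] ! i ! j"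
      apply (drule less5, drule less5)
      apply (elim disjE)
      apply (simp_all only: eqs z0 z1 z2 z3 z4 s10 d01 s20 d02 s30 s40 s21 d12 s31 d13 s41 s32 d23 s42 d24 s43 d34)
      apply simp_all
      done
    show False
      using cert[where u = "[6,4,4,4,5]" and w = "[2,-6,5,-6,3]", OF sg cg lam inj img _ _ tab]
      by (simp add: qf_def lessThan_nat_numeral)
  qed
  have c11: "graph_dist n E (f 0) (f 3) = 3 \<Longrightarrow> graph_dist n E (f 0) (f 4) = 4 \<Longrightarrow> graph_dist n E (f 1) (f 4) = 3 \<Longrightarrow> False"
  proof -
    assume eqs: "graph_dist n E (f 0) (f 3) = 3" "graph_dist n E (f 0) (f 4) = 4" "graph_dist n E (f 1) (f 4) = 3"
    have tab: "\<And>i j. i < 5 \<Longrightarrow> j < 5 \<Longrightarrow> graph_dist n E (f i) (f j) = [[0,1,2,3,4],[1,0,1,2,3],[2,1,0,1,2],[3,2,1,0,1],[4,3,2,1,0]] ! i ! j"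
      apply (drule less5, drule less5)
      apply (elim disjE)
      apply (simp_all only: eqs z0 z1 z2 z3 z4 s10 d01 s20 d02 s30 s40 s21 d12 s31 d13 s41 s32 d23 s42 d24 s43 d34)
      apply simp_all
      done
    show False
      using cert[where u = "[5,4,4,4,5]" and w = "[2,-5,6,-5,2]", OF sg cg lam inj img _ _ tab]
      by (simp add: qf_def lessThan_nat_numeral)
  qed
  show False using d03 d04 d14 c0 c1 c2 c3 c4 c5 c6 c7 c8 c9 c10 c11 by blast
qed

lemma no_H1:
  assumes sg: "simple_graph n E" and cg: "connected_graph n E"
    and lam: "lambda_k 2 (dist_matrix n E) \<le> -569/1000"
  shows "\<not> induced_subgraph_of 4 H1 n E"
proof
  assume "induced_subgraph_of 4 H1 n E"
  then obtain f where inj: "inj_on f {0..<4}" and img: "f ` {0..<4} \<subseteq> {0..<n}"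
    and iff: "\<forall>i<4. \<forall>j<4. E (f i) (f j) \<longleftrightarrow> H1 i j" unfolding induced_subgraph_of_def by blast
  note L = sg cg inj img iff
  have z0: "graph_dist n E (f 0) (f 0) = 0" by (rule ind_self[OF L]) simp
  have z1: "graph_dist n E (f 1) (f 1) = 0" by (rule ind_self[OF L]) simp
  have z2: "graph_dist n E (f 2) (f 2) = 0" by (rule ind_self[OF L]) simp
  have z3: "graph_dist n E (f 3) (f 3) = 0" by (rule ind_self[OF L]) simp
  have s10: "graph_dist n E (f 1) (f 0) = graph_dist n E (f 0) (f 1)" by (rule ind_sym[OF L]) simp_all
  have d01: "graph_dist n E (f 0) (f 1) = 1" by (rule ind_adj[OF L]) (simp_all add: H1_def edges_of_def)
  have s20: "graph_dist n E (f 2) (f 0) = graph_dist n E (f 0) (f 2)" by (rule ind_sym[OF L]) simp_all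
  have d02: "graph_dist n E (f 0) (f 2) = 1" by (rule ind_adj[OF L]) (simp_all add: H1_def edges_of_def)
  have s30: "graph_dist n E (f 3) (f 0) = graph_dist n E (f 0) (f 3)" by (rule ind_sym[OF L]) simp_all
  have d03: "graph_dist n E (f 0) (f 3) = 1" by (rule ind_adj[OF L]) (simp_all add: H1_def edges_of_def)
  have s21: "graph_dist n E (f 2) (f 1) = graph_dist n E (f 1) (f 2)" by (rule ind_sym[OF L]) simp_all
  have d12: "graph_dist n E (f 1) (f 2) = 1" by (rule ind_adj[OF L]) (simp_all add: H1_def edges_of_def)
  have s31: "graph_dist n E (f 3) (f 1) = graph_dist n E (f 1) (f 3)" by (rule ind_sym[OF L]) simp_all
  have g13: "2 \<le> graph_dist n E (f 1) (f 3)" by (rule ind_ge2[OF L]) (simp_all add: H1_def edges_of_def)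
  have l13: "graph_dist n E (f 1) (f 3) \<le> 2" by (rule ind_w2[OF L, of 1 0 3]) (simp_all add: H1_def edges_of_def)
  have d13: "graph_dist n E (f 1) (f 3) = 2" using g13 l13 by linarith
  have s32: "graph_dist n E (f 3) (f 2) = graph_dist n E (f 2) (f 3)" by (rule ind_sym[OF L]) simp_all
  have d23: "graph_dist n E (f 2) (f 3) = 1" by (rule ind_adj[OF L]) (simp_all add: H1_def edges_of_def)
  have c0: "False"
  proof -
    note eqs = TrueI
    have tab: "\<And>i j. i < 4 \<Longrightarrow> j < 4 \<Longrightarrow> graph_dist n E (f i) (f j) = [[0,1,1,1],[1,0,1,2],[1,1,0,1],[1,2,1,0]] ! i ! j"
      apply (drule less4, drule less4)
      apply (elim disjE)
      apply (simp_all only: eqs z0 z1 z2 z3 s10 d01 s20 d02 s30 d03 s21 d12 s31 d13 s32 d23)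
      apply simp_all
      done
    show False
      using cert[where u = "[4,6,4,6]" and w = "[6,-4,6,-4]", OF sg cg lam inj img _ _ tab]
      by (simp add: qf_def lessThan_nat_numeral)
  qed
  show False using  c0 by blast
qed

lemma no_H2:
  assumes sg: "simple_graph n E" and cg: "connected_graph n E"
    and lam: "lambda_k 2 (dist_matrix n E) \<le> -569/1000"
  shows "\<not> induced_subgraph_of 5 H2 n E"
proof
  assume "induced_subgraph_of 5 H2 n E"
  then obtain f where inj: "inj_on f {0..<5}" and img: "f ` {0..<5} \<subseteq> {0..<n}"
    and iff: "\<forall>i<5. \<forall>j<5. E (f i) (f j) \<longleftrightarrow> H2 i j" unfolding induced_subgraph_of_def by blast
  note L = sg cg inj img iff
  have z0: "graph_dist n E (f 0) (f 0) = 0" by (rule ind_self[OF L]) simp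
  have z1: "graph_dist n E (f 1) (f 1) = 0" by (rule ind_self[OF L]) simp
  have z2: "graph_dist n E (f 2) (f 2) = 0" by (rule ind_self[OF L]) simp
  have z3: "graph_dist n E (f 3) (f 3) = 0" by (rule ind_self[OF L]) simp
  have z4: "graph_dist n E (f 4) (f 4) = 0" by (rule ind_self[OF L]) simp
  have s10: "graph_dist n E (f 1) (f 0) = graph_dist n E (f 0) (f 1)" by (rule ind_sym[OF L]) simp_all
  have d01: "graph_dist n E (f 0) (f 1) = 1" by (rule ind_adj[OF L]) (simp_all add: H2_def edges_of_def)
  have s20: "graph_dist n E (f 2) (f 0) = graph_dist n E (f 0) (f 2)" by (rule ind_sym[OF L]) simp_all
  have g02: "2 \<le> graph_dist n E (f 0) (f 2)" by (rule ind_ge2[OF L]) (simp_all add: H2_def edges_of_def)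
  have l02: "graph_dist n E (f 0) (f 2) \<le> 2" by (rule ind_w2[OF L, of 0 1 2]) (simp_all add: H2_def edges_of_def)
  have d02: "graph_dist n E (f 0) (f 2) = 2" using g02 l02 by linarith
  have s30: "graph_dist n E (f 3) (f 0) = graph_dist n E (f 0) (f 3)" by (rule ind_sym[OF L]) simp_all
  have g03: "2 \<le> graph_dist n E (f 0) (f 3)" by (rule ind_ge2[OF L]) (simp_all add: H2_def edges_of_def)
  have l03: "graph_dist n E (f 0) (f 3) \<le> 3" by (rule ind_w3[OF L, of 0 1 2 3]) (simp_all add: H2_def edges_of_def)
  have d03: "graph_dist n E (f 0) (f 3) = 2 \<or> graph_dist n E (f 0) (f 3) = 3" using g03 l03 by linarith
  have s40: "graph_dist n E (f 4) (f 0) = graph_dist n E (f 0) (f 4)" by (rule ind_sym[OF L]) simp_all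
  have g04: "2 \<le> graph_dist n E (f 0) (f 4)" by (rule ind_ge2[OF L]) (simp_all add: H2_def edges_of_def)
  have l04: "graph_dist n E (f 0) (f 4) \<le> 2" by (rule ind_w2[OF L, of 0 1 4]) (simp_all add: H2_def edges_of_def)
  have d04: "graph_dist n E (f 0) (f 4) = 2" using g04 l04 by linarith
  have s21: "graph_dist n E (f 2) (f 1) = graph_dist n E (f 1) (f 2)" by (rule ind_sym[OF L]) simp_all
  have d12: "graph_dist n E (f 1) (f 2) = 1" by (rule ind_adj[OF L]) (simp_all add: H2_def edges_of_def)
  have s31: "graph_dist n E (f 3) (f 1) = graph_dist n E (f 1) (f 3)" by (rule ind_sym[OF L]) simp_all
  have g13: "2 \<le> graph_dist n E (f 1) (f 3)" by (rule ind_ge2[OF L]) (simp_all add: H2_def edges_of_def)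
  have l13: "graph_dist n E (f 1) (f 3) \<le> 2" by (rule ind_w2[OF L, of 1 2 3]) (simp_all add: H2_def edges_of_def)
  have d13: "graph_dist n E (f 1) (f 3) = 2" using g13 l13 by linarith
  have s41: "graph_dist n E (f 4) (f 1) = graph_dist n E (f 1) (f 4)" by (rule ind_sym[OF L]) simp_all
  have d14: "graph_dist n E (f 1) (f 4) = 1" by (rule ind_adj[OF L]) (simp_all add: H2_def edges_of_def)
  have s32: "graph_dist n E (f 3) (f 2) = graph_dist n E (f 2) (f 3)" by (rule ind_sym[OF L]) simp_all
  have d23: "graph_dist n E (f 2) (f 3) = 1" by (rule ind_adj[OF L]) (simp_all add: H2_def edges_of_def)
  have s42: "graph_dist n E (f 4) (f 2) = graph_dist n E (f 2) (f 4)" by (rule ind_sym[OF L]) simp_all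
  have g24: "2 \<le> graph_dist n E (f 2) (f 4)" by (rule ind_ge2[OF L]) (simp_all add: H2_def edges_of_def)
  have l24: "graph_dist n E (f 2) (f 4) \<le> 2" by (rule ind_w2[OF L, of 2 1 4]) (simp_all add: H2_def edges_of_def)
  have d24: "graph_dist n E (f 2) (f 4) = 2" using g24 l24 by linarith
  have s43: "graph_dist n E (f 4) (f 3) = graph_dist n E (f 3) (f 4)" by (rule ind_sym[OF L]) simp_all
  have g34: "2 \<le> graph_dist n E (f 3) (f 4)" by (rule ind_ge2[OF L]) (simp_all add: H2_def edges_of_def)
  have l34: "graph_dist n E (f 3) (f 4) \<le> 3" by (rule ind_w3[OF L, of 3 2 1 4]) (simp_all add: H2_def edges_of_def)
  have d34: "graph_dist n E (f 3) (f 4) = 2 \<or> graph_dist n E (f 3) (f 4) = 3" using g34 l34 by linarith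
  have c0: "graph_dist n E (f 0) (f 3) = 2 \<Longrightarrow> graph_dist n E (f 3) (f 4) = 2 \<Longrightarrow> False"
  proof -
    assume eqs: "graph_dist n E (f 0) (f 3) = 2" "graph_dist n E (f 3) (f 4) = 2"
    have tab: "\<And>i j. i < 5 \<Longrightarrow> j < 5 \<Longrightarrow> graph_dist n E (f i) (f j) = [[0,1,2,2,2],[1,0,1,2,1],[2,1,0,1,2],[2,2,1,0,2],[2,1,2,2,0]] ! i ! j"
      apply (drule less5, drule less5)
      apply (elim disjE)
      apply (simp_all only: eqs z0 z1 z2 z3 z4 s10 d01 s20 d02 s30 s40 d04 s21 d12 s31 d13 s41 d14 s32 d23 s42 d24 s43)
      apply simp_all
      done
    show False
      using cert[where u = "[5,4,4,5,5]" and w = "[2,-7,5,-4,2]", OF sg cg lam inj img _ _ tab]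
      by (simp add: qf_def lessThan_nat_numeral)
  qed
  have c1: "graph_dist n E (f 0) (f 3) = 2 \<Longrightarrow> graph_dist n E (f 3) (f 4) = 3 \<Longrightarrow> False"
  proof -
    assume eqs: "graph_dist n E (f 0) (f 3) = 2" "graph_dist n E (f 3) (f 4) = 3"
    have tab: "\<And>i j. i < 5 \<Longrightarrow> j < 5 \<Longrightarrow> graph_dist n E (f i) (f j) = [[0,1,2,2,2],[1,0,1,2,1],[2,1,0,1,2],[2,2,1,0,3],[2,1,2,3,0]] ! i ! j"
      apply (drule less5, drule less5)
      apply (elim disjE)
      apply (simp_all only: eqs z0 z1 z2 z3 z4 s10 d01 s20 d02 s30 s40 d04 s21 d12 s31 d13 s41 d14 s32 d23 s42 d24 s43)
      apply simp_all
      done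
    show False
      using cert[where u = "[5,3,4,5,5]" and w = "[3,-7,5,-4,1]", OF sg cg lam inj img _ _ tab]
      by (simp add: qf_def lessThan_nat_numeral)
  qed
  have c2: "graph_dist n E (f 0) (f 3) = 3 \<Longrightarrow> graph_dist n E (f 3) (f 4) = 2 \<Longrightarrow> False"
  proof -
    assume eqs: "graph_dist n E (f 0) (f 3) = 3" "graph_dist n E (f 3) (f 4) = 2"
    have tab: "\<And>i j. i < 5 \<Longrightarrow> j < 5 \<Longrightarrow> graph_dist n E (f i) (f j) = [[0,1,2,3,2],[1,0,1,2,1],[2,1,0,1,2],[3,2,1,0,2],[2,1,2,2,0]] ! i ! j"
      apply (drule less5, drule less5)
      apply (elim disjE)
      apply (simp_all only: eqs z0 z1 z2 z3 z4 s10 d01 s20 d02 s30 s40 d04 s21 d12 s31 d13 s41 d14 s32 d23 s42 d24 s43)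
      apply simp_all
      done
    show False
      using cert[where u = "[5,3,4,5,5]" and w = "[1,-7,5,-4,3]", OF sg cg lam inj img _ _ tab]
      by (simp add: qf_def lessThan_nat_numeral)
  qed
  have c3: "graph_dist n E (f 0) (f 3) = 3 \<Longrightarrow> graph_dist n E (f 3) (f 4) = 3 \<Longrightarrow> False"
  proof -
    assume eqs: "graph_dist n E (f 0) (f 3) = 3" "graph_dist n E (f 3) (f 4) = 3"
    have tab: "\<And>i j. i < 5 \<Longrightarrow> j < 5 \<Longrightarrow> graph_dist n E (f i) (f j) = [[0,1,2,3,2],[1,0,1,2,1],[2,1,0,1,2],[3,2,1,0,3],[2,1,2,3,0]] ! i ! j"
      apply (drule less5, drule less5)
      apply (elim disjE)
      apply (simp_all only: eqs z0 z1 z2 z3 z4 s10 d01 s20 d02 s30 s40 d04 s21 d12 s31 d13 s41 d14 s32 d23 s42 d24 s43)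
      apply simp_all
      done
    show False
      using cert[where u = "[5,3,4,5,5]" and w = "[2,-8,5,-3,2]", OF sg cg lam inj img _ _ tab]
      by (simp add: qf_def lessThan_nat_numeral)
  qed
  show False using d03 d34 c0 c1 c2 c3 by blast
qed

lemma no_H3:
  assumes sg: "simple_graph n E" and cg: "connected_graph n E"
    and lam: "lambda_k 2 (dist_matrix n E) \<le> -569/1000"
  shows "\<not> induced_subgraph_of 5 H3 n E"
proof
  assume "induced_subgraph_of 5 H3 n E"
  then obtain f where inj: "inj_on f {0..<5}" and img: "f ` {0..<5} \<subseteq> {0..<n}"
    and iff: "\<forall>i<5. \<forall>j<5. E (f i) (f j) \<longleftrightarrow> H3 i j" unfolding induced_subgraph_of_def by blast
  note L = sg cg inj img iff
  have z0: "graph_dist n E (f 0) (f 0) = 0" by (rule ind_self[OF L]) simp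
  have z1: "graph_dist n E (f 1) (f 1) = 0" by (rule ind_self[OF L]) simp
  have z2: "graph_dist n E (f 2) (f 2) = 0" by (rule ind_self[OF L]) simp
  have z3: "graph_dist n E (f 3) (f 3) = 0" by (rule ind_self[OF L]) simp
  have z4: "graph_dist n E (f 4) (f 4) = 0" by (rule ind_self[OF L]) simp
  have s10: "graph_dist n E (f 1) (f 0) = graph_dist n E (f 0) (f 1)" by (rule ind_sym[OF L]) simp_all
  have d01: "graph_dist n E (f 0) (f 1) = 1" by (rule ind_adj[OF L]) (simp_all add: H3_def edges_of_def)
  have s20: "graph_dist n E (f 2) (f 0) = graph_dist n E (f 0) (f 2)" by (rule ind_sym[OF L]) simp_all
  have g02: "2 \<le> graph_dist n E (f 0) (f 2)" by (rule ind_ge2[OF L]) (simp_all add: H3_def edges_of_def)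
  have l02: "graph_dist n E (f 0) (f 2) \<le> 2" by (rule ind_w2[OF L, of 0 1 2]) (simp_all add: H3_def edges_of_def)
  have d02: "graph_dist n E (f 0) (f 2) = 2" using g02 l02 by linarith
  have s30: "graph_dist n E (f 3) (f 0) = graph_dist n E (f 0) (f 3)" by (rule ind_sym[OF L]) simp_all
  have g03: "2 \<le> graph_dist n E (f 0) (f 3)" by (rule ind_ge2[OF L]) (simp_all add: H3_def edges_of_def)
  have l03: "graph_dist n E (f 0) (f 3) \<le> 3" by (rule ind_w3[OF L, of 0 1 2 3]) (simp_all add: H3_def edges_of_def)
  have d03: "graph_dist n E (f 0) (f 3) = 2 \<or> graph_dist n E (f 0) (f 3) = 3" using g03 l03 by linarith
  have s40: "graph_dist n E (f 4) (f 0) = graph_dist n E (f 0) (f 4)" by (rule ind_sym[OF L]) simp_all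
  have d04: "graph_dist n E (f 0) (f 4) = 1" by (rule ind_adj[OF L]) (simp_all add: H3_def edges_of_def)
  have s21: "graph_dist n E (f 2) (f 1) = graph_dist n E (f 1) (f 2)" by (rule ind_sym[OF L]) simp_all
  have d12: "graph_dist n E (f 1) (f 2) = 1" by (rule ind_adj[OF L]) (simp_all add: H3_def edges_of_def)
  have s31: "graph_dist n E (f 3) (f 1) = graph_dist n E (f 1) (f 3)" by (rule ind_sym[OF L]) simp_all
  have g13: "2 \<le> graph_dist n E (f 1) (f 3)" by (rule ind_ge2[OF L]) (simp_all add: H3_def edges_of_def)
  have l13: "graph_dist n E (f 1) (f 3) \<le> 2" by (rule ind_w2[OF L, of 1 2 3]) (simp_all add: H3_def edges_of_def)
  have d13: "graph_dist n E (f 1) (f 3) = 2" using g13 l13 by linarith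
  have s41: "graph_dist n E (f 4) (f 1) = graph_dist n E (f 1) (f 4)" by (rule ind_sym[OF L]) simp_all
  have d14: "graph_dist n E (f 1) (f 4) = 1" by (rule ind_adj[OF L]) (simp_all add: H3_def edges_of_def)
  have s32: "graph_dist n E (f 3) (f 2) = graph_dist n E (f 2) (f 3)" by (rule ind_sym[OF L]) simp_all
  have d23: "graph_dist n E (f 2) (f 3) = 1" by (rule ind_adj[OF L]) (simp_all add: H3_def edges_of_def)
  have s42: "graph_dist n E (f 4) (f 2) = graph_dist n E (f 2) (f 4)" by (rule ind_sym[OF L]) simp_all
  have g24: "2 \<le> graph_dist n E (f 2) (f 4)" by (rule ind_ge2[OF L]) (simp_all add: H3_def edges_of_def)
  have l24: "graph_dist n E (f 2) (f 4) \<le> 2" by (rule ind_w2[OF L, of 2 1 4]) (simp_all add: H3_def edges_of_def)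
  have d24: "graph_dist n E (f 2) (f 4) = 2" using g24 l24 by linarith
  have s43: "graph_dist n E (f 4) (f 3) = graph_dist n E (f 3) (f 4)" by (rule ind_sym[OF L]) simp_all
  have g34: "2 \<le> graph_dist n E (f 3) (f 4)" by (rule ind_ge2[OF L]) (simp_all add: H3_def edges_of_def)
  have l34: "graph_dist n E (f 3) (f 4) \<le> 3" by (rule ind_w3[OF L, of 3 2 1 4]) (simp_all add: H3_def edges_of_def)
  have d34: "graph_dist n E (f 3) (f 4) = 2 \<or> graph_dist n E (f 3) (f 4) = 3" using g34 l34 by linarith
  have c0: "graph_dist n E (f 0) (f 3) = 2 \<Longrightarrow> graph_dist n E (f 3) (f 4) = 2 \<Longrightarrow> False"
  proof -
    assume eqs: "graph_dist n E (f 0) (f 3) = 2" "graph_dist n E (f 3) (f 4) = 2"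
    have tab: "\<And>i j. i < 5 \<Longrightarrow> j < 5 \<Longrightarrow> graph_dist n E (f i) (f j) = [[0,1,2,2,1],[1,0,1,2,1],[2,1,0,1,2],[2,2,1,0,2],[1,1,2,2,0]] ! i ! j"
      apply (drule less5, drule less5)
      apply (elim disjE)
      apply (simp_all only: eqs z0 z1 z2 z3 z4 s10 d01 s20 d02 s30 s40 d04 s21 d12 s31 d13 s41 d14 s32 d23 s42 d24 s43)
      apply simp_all
      done
    show False
      using cert[where u = "[4,4,4,5,4]" and w = "[2,-6,6,-4,2]", OF sg cg lam inj img _ _ tab]
      by (simp add: qf_def lessThan_nat_numeral)
  qed
  have c1: "graph_dist n E (f 0) (f 3) = 2 \<Longrightarrow> graph_dist n E (f 3) (f 4) = 3 \<Longrightarrow> False"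
  proof -
    assume eqs: "graph_dist n E (f 0) (f 3) = 2" "graph_dist n E (f 3) (f 4) = 3"
    have tab: "\<And>i j. i < 5 \<Longrightarrow> j < 5 \<Longrightarrow> graph_dist n E (f i) (f j) = [[0,1,2,2,1],[1,0,1,2,1],[2,1,0,1,2],[2,2,1,0,3],[1,1,2,3,0]] ! i ! j"
      apply (drule less5, drule less5)
      apply (elim disjE)
      apply (simp_all only: eqs z0 z1 z2 z3 z4 s10 d01 s20 d02 s30 s40 d04 s21 d12 s31 d13 s41 d14 s32 d23 s42 d24 s43)
      apply simp_all
      done
    show False
      using cert[where u = "[4,4,4,5,5]" and w = "[5,-5,6,-4,-1]", OF sg cg lam inj img _ _ tab]
      by (simp add: qf_def lessThan_nat_numeral)
  qed
  have c2: "graph_dist n E (f 0) (f 3) = 3 \<Longrightarrow> graph_dist n E (f 3) (f 4) = 2 \<Longrightarrow> False"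
  proof -
    assume eqs: "graph_dist n E (f 0) (f 3) = 3" "graph_dist n E (f 3) (f 4) = 2"
    have tab: "\<And>i j. i < 5 \<Longrightarrow> j < 5 \<Longrightarrow> graph_dist n E (f i) (f j) = [[0,1,2,3,1],[1,0,1,2,1],[2,1,0,1,2],[3,2,1,0,2],[1,1,2,2,0]] ! i ! j"
      apply (drule less5, drule less5)
      apply (elim disjE)
      apply (simp_all only: eqs z0 z1 z2 z3 z4 s10 d01 s20 d02 s30 s40 d04 s21 d12 s31 d13 s41 d14 s32 d23 s42 d24 s43)
      apply simp_all
      done
    show False
      using cert[where u = "[5,4,4,5,4]" and w = "[-1,-5,6,-4,5]", OF sg cg lam inj img _ _ tab]
      by (simp add: qf_def lessThan_nat_numeral)
  qed
  have c3: "graph_dist n E (f 0) (f 3) = 3 \<Longrightarrow> graph_dist n E (f 3) (f 4) = 3 \<Longrightarrow> False"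
  proof -
    assume eqs: "graph_dist n E (f 0) (f 3) = 3" "graph_dist n E (f 3) (f 4) = 3"
    have tab: "\<And>i j. i < 5 \<Longrightarrow> j < 5 \<Longrightarrow> graph_dist n E (f i) (f j) = [[0,1,2,3,1],[1,0,1,2,1],[2,1,0,1,2],[3,2,1,0,3],[1,1,2,3,0]] ! i ! j"
      apply (drule less5, drule less5)
      apply (elim disjE)
      apply (simp_all only: eqs z0 z1 z2 z3 z4 s10 d01 s20 d02 s30 s40 d04 s21 d12 s31 d13 s41 d14 s32 d23 s42 d24 s43)
      apply simp_all
      done
    show False
      using cert[where u = "[46,34,39,55,46]" and w = "[15,-69,63,-27,15]", OF sg cg lam inj img _ _ tab]
      by (simp add: qf_def lessThan_nat_numeral)
  qed
  show False using d03 d34 c0 c1 c2 c3 by blast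
qed

theorem lemma2p5:
  fixes n :: nat and E :: "nat \<Rightarrow> nat \<Rightarrow> bool"
  assumes "simple_graph n E" and "connected_graph n E"
    and "lambda_k 2 (dist_matrix n E) \<le> (17 - sqrt 329) / 2"
  shows "\<not> induced_subgraph_of 4 C4 n E \<and> \<not> induced_subgraph_of 5 C5 n E
    \<and> \<not> induced_subgraph_of 5 P5 n E \<and> \<not> induced_subgraph_of 4 H1 n E
    \<and> \<not> induced_subgraph_of 5 H2 n E \<and> \<not> induced_subgraph_of 5 H3 n E"
proof -
  have "18138 / 1000 \<le> sqrt (329 :: real)" by (rule real_le_rsqrt) (simp add: power2_eq_square)
  hence "(17 - sqrt 329) / 2 \<le> (-569/1000 :: real)" by simp
  hence lam: "lambda_k 2 (dist_matrix n E) \<le> -569/1000" using assms(3) by (rule order_trans[rotated])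
  show ?thesis using no_C4[OF assms(1,2) lam] no_C5[OF assms(1,2) lam] no_P5[OF assms(1,2) lam]
    no_H1[OF assms(1,2) lam] no_H2[OF assms(1,2) lam] no_H3[OF assms(1,2) lam] by blast
qed

end
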